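(* Let $N$ be a positive integer and let the mesh $\Omega_N=\{\theta_{N,i}:i=-N,\dots,N\}$ satisfy $\theta_{N,-i}=-\theta_{N,i}$ for $i=1,\dots,N$. For $\lambda\in\mathbb{C}$ let $p_N(\cdot;\lambda)$ be the polynomial of degree at most $2N$ satisfying $p_N(0;\lambda)=1$ and $p_N'(\theta_{N,i};\lambda)=\lambda\,p_N(\theta_{N,i};\lambda)$ for $i\in\{-N,\dots,N\}\setminus\{0\}$. Let $\xi>0$ be such that $\det(D^TD-\xi^2I)\ne0$, and let $\omega\in\mathbb{R}$ be such that $p_N(\cdot;j\omega)$ is uniquely defined and $j\omega I-A_0-\sum_{i=1}^mA_ip_N(-\tau_i;j\omega)$ is nonsingular, so that $G_N(j\omega)=C\left(j\omega I-A_0-\sum_{i=1}^m A_ip_N(-\tau_i;j\omega)\right)^{-1}B+D$ is defined. Then the matrix $\mathcal{L}_\xi^N$ has the eigenvalue $\lambda=j\omega$ if and only if $G_N(j\omega)$ has a singular value equal to $\xi$.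
   Context: Let $n,m,n_u,n_y$ be positive integers, $A_0,\dots,A_m\in\mathbb{R}^{n\times n}$, $B\in\mathbb{R}^{n\times n_u}$, $C\in\mathbb{R}^{n_y\times n}$, $D\in\mathbb{R}^{n_y\times n_u}$, delays $\tau_1,\dots,\tau_m\ge0$, $\tau_{\max}=\max_i\tau_i>0$. For $\xi>0$ put $D_\xi=D^TD-\xi^2I_{n_u}$, $\tilde D_\xi=DD^T-\xi^2I_{n_y}$, and define $2n\times2n$ matrices $M_0=\begin{bmatrix} A_0-BD_\xi^{-1}D^TC & -BD_\xi^{-1}B^T\\ \xi^2 C^T\tilde D_\xi^{-1}C & -A_0^T+C^TDD_\xi^{-1}B^T\end{bmatrix}$, $M_i=\begin{bmatrix}A_i&0\\0&0\end{bmatrix}$, $M_{-i}=\begin{bmatrix}0&0\\0&-A_i^T\end{bmatrix}$, $1\le i\le m$. A mesh $\Omega_N$ consists of $2N+1$ points $-\tau_{\max}\le\theta_{N,-N}<\dots<\theta_{N,0}=0<\dots<\theta_{N,N}\le\tau_{\max}$. Let $X_N=(\mathbb{C}^{2n})^{2N+1}$ with elements $x=(x_{-N},\dots,x_N)$ and let $\mathcal{P}_Nx$ be the unique $\mathbb{C}^{2n}$-valued polynomial of degree $\le2N$ with $\mathcal{P}_Nx(\theta_{N,i})=x_i$. The matrix $\mathcal{L}_\xi^N:X_N\to X_N$ is defined by $(\mathcal{L}_\xi^Nx)_i=(\mathcal{P}_Nx)'(\theta_{N,i})$ for $i\neq0$ and $(\mathcal{L}_\xi^Nx)_0=M_0\mathcal{P}_Nx(0)+\sum_{i=1}^m\left(M_i\mathcal{P}_Nx(-\tau_i)+M_{-i}\mathcal{P}_Nx(\tau_i)\right)$.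 *)

theory Defs
  imports "Jordan_Normal_Form.Schur_Decomposition" "Jordan_Normal_Form.Gauss_Jordan_Elimination"
    "Jordan_Normal_Form.Char_Poly" "HOL-Computational_Algebra.Polynomial"
begin

definition vsum :: "nat \<Rightarrow> (nat \<Rightarrow> 'a::comm_monoid_add vec) \<Rightarrow> nat set \<Rightarrow> 'a vec" where
  "vsum d f I = vec d (\<lambda>k. \<Sum>l\<in>I. f l $ k)"

definition msum :: "nat \<Rightarrow> (nat \<Rightarrow> 'a::comm_monoid_add mat) \<Rightarrow> nat set \<Rightarrow> 'a mat" where
  "msum d f I = mat d d (\<lambda>(r,c). \<Sum>l\<in>I. f l $$ (r,c))"

definition cmat :: "real mat \<Rightarrow> complex mat" where
  "cmat M = map_mat complex_of_real M"

definition minv :: "'a::field mat \<Rightarrow> 'a mat" where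
  "minv M = the (mat_inverse M)"

definition interp_poly :: "(int \<Rightarrow> real) \<Rightarrow> nat \<Rightarrow> (int \<Rightarrow> complex) \<Rightarrow> complex poly" where
  "interp_poly \<theta> N f = (THE q. degree q \<le> 2*N \<and>
      (\<forall>i\<in>{-int N..int N}. poly q (complex_of_real (\<theta> i)) = f i))"

definition PN :: "(int \<Rightarrow> real) \<Rightarrow> nat \<Rightarrow> nat \<Rightarrow> (int \<Rightarrow> complex vec) \<Rightarrow> real \<Rightarrow> complex vec" where
  "PN \<theta> N d x t = vec d (\<lambda>k. poly (interp_poly \<theta> N (\<lambda>i. x i $ k)) (complex_of_real t))"

definition PN_deriv :: "(int \<Rightarrow> real) \<Rightarrow> nat \<Rightarrow> nat \<Rightarrow> (int \<Rightarrow> complex vec) \<Rightarrow> real \<Rightarrow> complex vec" where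
  "PN_deriv \<theta> N d x t = vec d (\<lambda>k. poly (pderiv (interp_poly \<theta> N (\<lambda>i. x i $ k))) (complex_of_real t))"

definition Dxi :: "nat \<Rightarrow> real mat \<Rightarrow> real \<Rightarrow> real mat" where
  "Dxi nu D \<xi> = transpose_mat D * D - (\<xi>^2) \<cdot>\<^sub>m 1\<^sub>m nu"

definition Dtxi :: "nat \<Rightarrow> real mat \<Rightarrow> real \<Rightarrow> real mat" where
  "Dtxi ny D \<xi> = D * transpose_mat D - (\<xi>^2) \<cdot>\<^sub>m 1\<^sub>m ny"

definition M0 :: "nat \<Rightarrow> nat \<Rightarrow> real mat \<Rightarrow> real mat \<Rightarrow> real mat \<Rightarrow> real mat \<Rightarrow> real \<Rightarrow> real mat" where
  "M0 nu ny A0 B C D \<xi> = four_block_mat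
     (A0 - B * minv (Dxi nu D \<xi>) * transpose_mat D * C)
     ((-1) \<cdot>\<^sub>m (B * minv (Dxi nu D \<xi>) * transpose_mat B))
     ((\<xi>^2) \<cdot>\<^sub>m (transpose_mat C * minv (Dtxi ny D \<xi>) * C))
     ((-1) \<cdot>\<^sub>m transpose_mat A0 + transpose_mat C * D * minv (Dxi nu D \<xi>) * transpose_mat B)"

definition Mplus :: "nat \<Rightarrow> real mat \<Rightarrow> real mat" where
  "Mplus n Ai = four_block_mat Ai (0\<^sub>m n n) (0\<^sub>m n n) (0\<^sub>m n n)"

definition Mminus :: "nat \<Rightarrow> real mat \<Rightarrow> real mat" where
  "Mminus n Ai = four_block_mat (0\<^sub>m n n) (0\<^sub>m n n) (0\<^sub>m n n) ((-1) \<cdot>\<^sub>m transpose_mat Ai)"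

definition LN_op :: "nat \<Rightarrow> nat \<Rightarrow> nat \<Rightarrow> nat \<Rightarrow> (nat \<Rightarrow> real mat) \<Rightarrow> real mat \<Rightarrow> real mat \<Rightarrow> real mat
     \<Rightarrow> (nat \<Rightarrow> real) \<Rightarrow> (int \<Rightarrow> real) \<Rightarrow> nat \<Rightarrow> real \<Rightarrow> (int \<Rightarrow> complex vec) \<Rightarrow> int \<Rightarrow> complex vec" where
  "LN_op n m nu ny A B C D \<tau> \<theta> N \<xi> x i =
    (if i = 0 then
       cmat (M0 nu ny (A 0) B C D \<xi>) *\<^sub>v PN \<theta> N (2*n) x 0
       + vsum (2*n) (\<lambda>l. cmat (Mplus n (A l)) *\<^sub>v PN \<theta> N (2*n) x (- \<tau> l)
                        + cmat (Mminus n (A l)) *\<^sub>v PN \<theta> N (2*n) x (\<tau> l)) {1..m}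
     else PN_deriv \<theta> N (2*n) x (\<theta> i))"

(* the matrix of L_xi^N w.r.t. the standard basis of X_N = C^{2n(2N+1)};
   block index i \<in> {-N..N} corresponds to position nat (i + N) *)
definition unflatten :: "nat \<Rightarrow> nat \<Rightarrow> complex vec \<Rightarrow> int \<Rightarrow> complex vec" where
  "unflatten d N v i = vec d (\<lambda>k. v $ (nat (i + int N) * d + k))"

definition LN_mat :: "nat \<Rightarrow> nat \<Rightarrow> nat \<Rightarrow> nat \<Rightarrow> (nat \<Rightarrow> real mat) \<Rightarrow> real mat \<Rightarrow> real mat \<Rightarrow> real mat
     \<Rightarrow> (nat \<Rightarrow> real) \<Rightarrow> (int \<Rightarrow> real) \<Rightarrow> nat \<Rightarrow> real \<Rightarrow> complex mat" where
  "LN_mat n m nu ny A B C D \<tau> \<theta> N \<xi> =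
     (let d = 2*n; K = d * (2*N+1) in
      mat K K (\<lambda>(r,c). LN_op n m nu ny A B C D \<tau> \<theta> N \<xi> (unflatten d N (unit_vec K c))
                          (int (r div d) - int N) $ (r mod d)))"

definition pN_prop :: "(int \<Rightarrow> real) \<Rightarrow> nat \<Rightarrow> complex \<Rightarrow> complex poly \<Rightarrow> bool" where
  "pN_prop \<theta> N lam p \<longleftrightarrow> degree p \<le> 2*N \<and> poly p 0 = 1 \<and>
     (\<forall>i\<in>{-int N..int N} - {0}. poly (pderiv p) (complex_of_real (\<theta> i))
                                  = lam * poly p (complex_of_real (\<theta> i)))"

definition pN :: "(int \<Rightarrow> real) \<Rightarrow> nat \<Rightarrow> complex \<Rightarrow> complex poly" where
  "pN \<theta> N lam = (THE p. pN_prop \<theta> N lam p)"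

definition KN :: "nat \<Rightarrow> nat \<Rightarrow> (nat \<Rightarrow> real mat) \<Rightarrow> (nat \<Rightarrow> real) \<Rightarrow> (int \<Rightarrow> real) \<Rightarrow> nat \<Rightarrow> real \<Rightarrow> complex mat" where
  "KN n m A \<tau> \<theta> N \<omega> = (\<i> * complex_of_real \<omega>) \<cdot>\<^sub>m 1\<^sub>m n - cmat (A 0)
     - msum n (\<lambda>l. poly (pN \<theta> N (\<i> * complex_of_real \<omega>)) (complex_of_real (- \<tau> l)) \<cdot>\<^sub>m cmat (A l)) {1..m}"

definition GN :: "nat \<Rightarrow> nat \<Rightarrow> (nat \<Rightarrow> real mat) \<Rightarrow> real mat \<Rightarrow> real mat \<Rightarrow> real mat
     \<Rightarrow> (nat \<Rightarrow> real) \<Rightarrow> (int \<Rightarrow> real) \<Rightarrow> nat \<Rightarrow> real \<Rightarrow> complex mat" where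
  "GN n m A B C D \<tau> \<theta> N \<omega> = cmat C * minv (KN n m A \<tau> \<theta> N \<omega>) * cmat B + cmat D"

definition singular_value :: "complex mat \<Rightarrow> real \<Rightarrow> bool" where
  "singular_value G s \<longleftrightarrow> s \<ge> 0 \<and> eigenvalue (mat_adjoint G * G) (complex_of_real (s^2))"

end

theory Submission
  imports Defs
begin


abbreviation "Imesh N \<equiv> {-int N..int N}"

lemma card_Imesh: "card (Imesh N) = 2*N+1"
  by (simp add: card_atLeastAtMost_int) 

lemma poly_vanish_mesh:
  fixes q :: "complex poly"
  assumes inj: "inj_on \<theta> (Imesh N)" and deg: "degree q \<le> 2*N"
    and z: "\<forall>i\<in>Imesh N. poly q (complex_of_real (\<theta> i)) = 0"
  shows "q = 0"
proof (rule ccontr)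
  assume q: "q \<noteq> 0"
  let ?S = "(\<lambda>i. complex_of_real (\<theta> i)) ` Imesh N"
  have sub: "?S \<subseteq> {x. poly q x = 0}" using z by auto
  have fin: "finite {x. poly q x = 0}" using poly_roots_finite[OF q] .
  have inj2: "inj_on (\<lambda>i. complex_of_real (\<theta> i)) (Imesh N)"
    using inj unfolding inj_on_def by auto
  have "card ?S = 2*N+1" using card_image[OF inj2] card_Imesh by simp
  moreover have "card ?S \<le> card {x. poly q x = 0}" by (rule card_mono[OF fin sub])
  moreover have "card {x. poly q x = 0} \<le> degree q" by (rule card_poly_roots_bound[OF q])
  ultimately show False using deg by simp
qed

definition lag :: "(int \<Rightarrow> real) \<Rightarrow> nat \<Rightarrow> int \<Rightarrow> complex poly" where
  "lag \<theta> N j = smult (1 / (\<Prod>m\<in>Imesh N - {j}. complex_of_real (\<theta> j - \<theta> m)))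
      (\<Prod>m\<in>Imesh N - {j}. [:- complex_of_real (\<theta> m), 1:])"

lemma lag_degree: assumes "j \<in> Imesh N" shows "degree (lag \<theta> N j) \<le> 2*N"
proof -
  have "degree (\<Prod>m\<in>Imesh N - {j}. [:- complex_of_real (\<theta> m), 1:])
     \<le> sum (degree \<circ> (\<lambda>m. [:- complex_of_real (\<theta> m), 1:])) (Imesh N - {j})"
    by (rule degree_prod_sum_le) simp
  also have "\<dots> = card (Imesh N - {j})" by simp
  also have "\<dots> = 2*N" using assms card_Imesh[of N] by (simp add: card_Diff_singleton)
  finally show ?thesis unfolding lag_def using degree_smult_le order_trans by blast
qed

lemma lag_poly:
  assumes inj: "inj_on \<theta> (Imesh N)" and j: "j \<in> Imesh N" and i: "i \<in> Imesh N"
  shows "poly (lag \<theta> N j) (complex_of_real (\<theta> i)) = (if i = j then 1 else 0)"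
proof (cases "i = j")
  case True
  have nz: "(\<Prod>m\<in>Imesh N - {j}. complex_of_real (\<theta> j - \<theta> m)) \<noteq> 0"
  proof -
    have "\<forall>m\<in>Imesh N - {j}. complex_of_real (\<theta> j - \<theta> m) \<noteq> 0"
      using inj j unfolding inj_on_def by auto
    then show ?thesis by (simp add: prod_zero_iff)
  qed
  have "poly (\<Prod>m\<in>Imesh N - {j}. [:- complex_of_real (\<theta> m), 1:]) (complex_of_real (\<theta> j))
     = (\<Prod>m\<in>Imesh N - {j}. complex_of_real (\<theta> j - \<theta> m))"
    by (simp add: poly_prod)
  then show ?thesis using True nz unfolding lag_def by simp
next
  case False
  have "poly (\<Prod>m\<in>Imesh N - {j}. [:- complex_of_real (\<theta> m), 1:]) (complex_of_real (\<theta> i)) = 0"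
    unfolding poly_prod using False i by (intro prod_zero) auto
  then show ?thesis using False unfolding lag_def by simp
qed

lemma interp_unique:
  assumes inj: "inj_on \<theta> (Imesh N)" and deg: "degree q \<le> 2*N"
    and q: "\<forall>i\<in>Imesh N. poly q (complex_of_real (\<theta> i)) = f i"
  shows "interp_poly \<theta> N f = q"
  unfolding interp_poly_def
proof (rule the_equality)
  show "degree q \<le> 2 * N \<and> (\<forall>i\<in>Imesh N. poly q (complex_of_real (\<theta> i)) = f i)"
    using deg q by simp
  fix r assume r: "degree r \<le> 2 * N \<and> (\<forall>i\<in>Imesh N. poly r (complex_of_real (\<theta> i)) = f i)"
  have "r - q = 0"
    by (rule poly_vanish_mesh[OF inj]) (use r deg q degree_diff_le in auto)
  then show "r = q" by simp
qed

lemma interp_lag: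
  assumes inj: "inj_on \<theta> (Imesh N)"
  shows "interp_poly \<theta> N f = (\<Sum>j\<in>Imesh N. smult (f j) (lag \<theta> N j))"
proof (rule interp_unique[OF inj])
  show "degree (\<Sum>j\<in>Imesh N. smult (f j) (lag \<theta> N j)) \<le> 2 * N"
    by (rule degree_sum_le) (auto simp: lag_degree)
  show "\<forall>i\<in>Imesh N. poly (\<Sum>j\<in>Imesh N. smult (f j) (lag \<theta> N j)) (complex_of_real (\<theta> i)) = f i"
  proof
    fix i assume i: "i \<in> Imesh N"
    have "poly (\<Sum>j\<in>Imesh N. smult (f j) (lag \<theta> N j)) (complex_of_real (\<theta> i))
       = (\<Sum>j\<in>Imesh N. if j = i then f j else 0)"
      unfolding poly_sum by (intro sum.cong) (auto simp: lag_poly[OF inj _ i])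
    also have "\<dots> = f i" using i by (simp add: sum.delta)
    finally show "poly (\<Sum>j\<in>Imesh N. smult (f j) (lag \<theta> N j)) (complex_of_real (\<theta> i)) = f i" .
  qed
qed

lemma PN_index:
  assumes inj: "inj_on \<theta> (Imesh N)" and k: "k < d"
  shows "PN \<theta> N d x t $ k = (\<Sum>j\<in>Imesh N. x j $ k * poly (lag \<theta> N j) (complex_of_real t))"
  unfolding PN_def using k by (simp add: interp_lag[OF inj] poly_sum)

lemma PN_deriv_index:
  assumes inj: "inj_on \<theta> (Imesh N)" and k: "k < d"
  shows "PN_deriv \<theta> N d x t $ k = (\<Sum>j\<in>Imesh N. x j $ k * poly (pderiv (lag \<theta> N j)) (complex_of_real t))"
  unfolding PN_deriv_def using k by (simp add: interp_lag[OF inj] poly_sum pderiv_sum pderiv_smult)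

lemma dim_PN[simp]: "dim_vec (PN \<theta> N d x t) = d" "dim_vec (PN_deriv \<theta> N d x t) = d"
  "PN \<theta> N d x t \<in> carrier_vec d" "PN_deriv \<theta> N d x t \<in> carrier_vec d"
  unfolding PN_def PN_deriv_def by auto


definition is_lin :: "nat \<Rightarrow> nat \<Rightarrow> ((int \<Rightarrow> complex vec) \<Rightarrow> complex) \<Rightarrow> bool" where
  "is_lin d N F \<longleftrightarrow> (\<exists>c. \<forall>x. F x = (\<Sum>j\<in>Imesh N. \<Sum>k<d. c j k * x j $ k))"

lemma is_lin_zero: "is_lin d N (\<lambda>x. 0)"
  unfolding is_lin_def by (rule exI[of _ "\<lambda>j k. 0"]) simp

lemma is_lin_add: "is_lin d N F \<Longrightarrow> is_lin d N G \<Longrightarrow> is_lin d N (\<lambda>x. F x + G x)"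
  unfolding is_lin_def
proof (elim exE)
  fix c1 c2 assume 1: "\<forall>x. F x = (\<Sum>j\<in>Imesh N. \<Sum>k<d. c1 j k * x j $ k)"
    and 2: "\<forall>x. G x = (\<Sum>j\<in>Imesh N. \<Sum>k<d. c2 j k * x j $ k)"
  show "\<exists>c. \<forall>x. F x + G x = (\<Sum>j\<in>Imesh N. \<Sum>k<d. c j k * x j $ k)"
    by (rule exI[of _ "\<lambda>j k. c1 j k + c2 j k"]) (simp add: 1 2 sum.distrib distrib_right)
qed

lemma is_lin_scale: "is_lin d N F \<Longrightarrow> is_lin d N (\<lambda>x. a * F x)"
  unfolding is_lin_def
proof (elim exE)
  fix c1 assume 1: "\<forall>x. F x = (\<Sum>j\<in>Imesh N. \<Sum>k<d. c1 j k * x j $ k)"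
  show "\<exists>c. \<forall>x. a * F x = (\<Sum>j\<in>Imesh N. \<Sum>k<d. c j k * x j $ k)"
    by (rule exI[of _ "\<lambda>j k. a * c1 j k"]) (simp add: 1 sum_distrib_left mult.assoc)
qed

lemma is_lin_sum: assumes "finite S" "\<And>l. l \<in> S \<Longrightarrow> is_lin d N (F l)"
  shows "is_lin d N (\<lambda>x. \<Sum>l\<in>S. F l x)"
  using assms by (induction S rule: finite_induct) (auto intro: is_lin_zero is_lin_add)

lemma is_lin_comp: assumes "k < d" "j \<in> Imesh N" shows "is_lin d N (\<lambda>x. x j $ k)"
  unfolding is_lin_def
proof (rule exI[of _ "\<lambda>j' k'. if j' = j \<and> k' = k then 1 else 0"], rule allI)
  fix x :: "int \<Rightarrow> complex vec"
  have "(\<Sum>j'\<in>Imesh N. \<Sum>k'<d. (if j' = j \<and> k' = k then 1 else 0) * x j' $ k')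
     = (\<Sum>j'\<in>Imesh N. if j' = j then x j' $ k else 0)"
  proof (rule sum.cong[OF refl])
    fix j' show "(\<Sum>k'<d. (if j' = j \<and> k' = k then 1 else 0) * x j' $ k') = (if j' = j then x j' $ k else 0)"
    proof -
      have "(\<Sum>k'<d. (if j' = j \<and> k' = k then 1 else 0) * x j' $ k') = (\<Sum>k'<d. if k' = k then (if j' = j then x j' $ k' else 0) else 0)"
        by (rule sum.cong) auto
      also have "\<dots> = (if j' = j then x j' $ k else 0)" using assms(1) by (simp add: sum.delta)
      finally show ?thesis .
    qed
  qed
  also have "\<dots> = x j $ k" using assms(2) by (simp add: sum.delta)
  finally show "x j $ k = (\<Sum>j'\<in>Imesh N. \<Sum>k'<d. (if j' = j \<and> k' = k then 1 else 0) * x j' $ k')" by simp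
qed

lemma is_lin_PN: assumes inj: "inj_on \<theta> (Imesh N)" and k: "k < d"
  shows "is_lin d N (\<lambda>x. PN \<theta> N d x t $ k)"
  unfolding PN_index[OF inj k]
  by (rule is_lin_sum) (auto simp: mult.commute[of _ "poly _ _"] intro!: is_lin_scale is_lin_comp k)

lemma is_lin_PN_deriv: assumes inj: "inj_on \<theta> (Imesh N)" and k: "k < d"
  shows "is_lin d N (\<lambda>x. PN_deriv \<theta> N d x t $ k)"
  unfolding PN_deriv_index[OF inj k]
  by (rule is_lin_sum) (auto simp: mult.commute[of _ "poly _ _"] intro!: is_lin_scale is_lin_comp k)

lemma is_lin_matPN: assumes inj: "inj_on \<theta> (Imesh N)" and k: "k < d" and M: "M \<in> carrier_mat d d"
  shows "is_lin d N (\<lambda>x. (M *\<^sub>v PN \<theta> N d x t) $ k)"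
proof -
  have "\<And>x. (M *\<^sub>v PN \<theta> N d x t) $ k = (\<Sum>k'\<in>{0..<d}. M $$ (k,k') * PN \<theta> N d x t $ k')"
    using M k by (simp add: scalar_prod_def row_def)
  then show ?thesis
    by (simp only:) (rule is_lin_sum, auto intro!: is_lin_scale is_lin_PN inj)
qed

lemma lin_flat:
  assumes F: "is_lin d N F" and w: "w \<in> carrier_vec (d * (2*N+1))"
  shows "(\<Sum>c<d * (2*N+1). F (unflatten d N (unit_vec (d * (2*N+1)) c)) * w $ c) = F (unflatten d N w)"
proof -
  let ?K = "d * (2*N+1)"
  obtain a where a: "\<And>x. F x = (\<Sum>j\<in>Imesh N. \<Sum>k<d. a j k * x j $ k)"
    using F unfolding is_lin_def by blast
  have idx: "nat (j + int N) * d + k < ?K" if "j \<in> Imesh N" "k < d" for j k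
  proof -
    have "nat (j + int N) \<le> 2*N" using that by auto
    then have "nat (j + int N) * d \<le> 2*N*d" by (rule mult_le_mono1)
    then have "nat (j + int N) * d + k < 2*N*d + d" using that by linarith
    then show ?thesis by (simp add: algebra_simps)
  qed
  have "(\<Sum>c<?K. F (unflatten d N (unit_vec ?K c)) * w $ c)
     = (\<Sum>c<?K. \<Sum>j\<in>Imesh N. \<Sum>k<d. a j k * (if nat (j + int N) * d + k = c then 1 else 0) * w $ c)"
    unfolding a unflatten_def sum_distrib_right
  proof (intro sum.cong refl)
    fix c j k assume "c \<in> {..<?K}" "j \<in> Imesh N" "k \<in> {..<d}"
    then show "a j k * vec d (\<lambda>k. unit_vec ?K c $ (nat (j + int N) * d + k)) $ k * w $ c =
         a j k * (if nat (j + int N) * d + k = c then 1 else 0) * w $ c"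
      using idx[of j k] by simp
  qed
  also have "\<dots> = (\<Sum>j\<in>Imesh N. \<Sum>k<d. \<Sum>c<?K. a j k * (if nat (j + int N) * d + k = c then 1 else 0) * w $ c)"
    by (subst sum.swap) (rule sum.cong[OF refl], rule sum.swap)
  also have "\<dots> = (\<Sum>j\<in>Imesh N. \<Sum>k<d. a j k * w $ (nat (j + int N) * d + k))"
  proof (intro sum.cong refl)
    fix j k assume "j \<in> Imesh N" "k \<in> {..<d}"
    then have "nat (j + int N) * d + k \<in> {..<?K}" using idx by auto
    then show "(\<Sum>c<?K. a j k * (if nat (j + int N) * d + k = c then 1 else 0) * w $ c) = a j k * w $ (nat (j + int N) * d + k)"
      by (simp add: if_distrib[of "\<lambda>z. a j k * z"] if_distrib[of "\<lambda>z. z * _"] sum.delta cong: if_cong)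
  qed
  also have "\<dots> = F (unflatten d N w)"
    unfolding a unflatten_def by (intro sum.cong refl) auto
  finally show ?thesis .
qed


lemma cmat_carrier[simp]: "cmat M \<in> carrier_mat a b \<longleftrightarrow> M \<in> carrier_mat a b"
  unfolding cmat_def carrier_mat_def by auto

lemma dim_cmat[simp]: "dim_row (cmat M) = dim_row M" "dim_col (cmat M) = dim_col M"
  unfolding cmat_def by auto

lemma M0_carrier: assumes "A0 \<in> carrier_mat n n" "B \<in> carrier_mat n nu" "C \<in> carrier_mat ny n"
  shows "M0 nu ny A0 B C D \<xi> \<in> carrier_mat (2*n) (2*n)"
proof -
  have 1: "A0 - B * minv (Dxi nu D \<xi>) * transpose_mat D * C \<in> carrier_mat n n"
    by (rule carrier_matI) (use assms in simp_all)
  have 2: "(-1) \<cdot>\<^sub>m transpose_mat A0 + transpose_mat C * D * minv (Dxi nu D \<xi>) * transpose_mat B \<in> carrier_mat n n"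
    by (rule carrier_matI) (use assms in simp_all)
  show ?thesis unfolding M0_def mult_2 by (rule four_block_carrier_mat[OF 1 2])
qed

lemma Mplus_carrier: "Ai \<in> carrier_mat n n \<Longrightarrow> Mplus n Ai \<in> carrier_mat (2*n) (2*n)"
  unfolding Mplus_def mult_2 by (rule four_block_carrier_mat) auto

lemma Mminus_carrier: "Ai \<in> carrier_mat n n \<Longrightarrow> Mminus n Ai \<in> carrier_mat (2*n) (2*n)"
  unfolding Mminus_def mult_2 by (rule four_block_carrier_mat) auto

lemma dim_vsum[simp]: "dim_vec (vsum d f S) = d" "vsum d f S \<in> carrier_vec d"
  unfolding vsum_def by auto

lemma index_vsum: "k < d \<Longrightarrow> vsum d f S $ k = (\<Sum>l\<in>S. f l $ k)"
  unfolding vsum_def by simp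

lemma LN_op_lin:
  assumes inj: "inj_on \<theta> (Imesh N)" and k: "k < 2*n"
    and A: "\<forall>i\<in>{0..m}. A i \<in> carrier_mat n n"
    and B: "B \<in> carrier_mat n nu" and C: "C \<in> carrier_mat ny n"
  shows "is_lin (2*n) N (\<lambda>x. LN_op n m nu ny A B C D \<tau> \<theta> N \<xi> x i $ k)"
proof (cases "i = 0")
  case True
  have M0: "cmat (M0 nu ny (A 0) B C D \<xi>) \<in> carrier_mat (2*n) (2*n)"
    using M0_carrier[of "A 0" n B nu C ny] A B C by auto
  have eq: "LN_op n m nu ny A B C D \<tau> \<theta> N \<xi> x i $ k =
     (cmat (M0 nu ny (A 0) B C D \<xi>) *\<^sub>v PN \<theta> N (2*n) x 0) $ k
     + (\<Sum>l\<in>{1..m}. (cmat (Mplus n (A l)) *\<^sub>v PN \<theta> N (2*n) x (- \<tau> l)) $ k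
                   + (cmat (Mminus n (A l)) *\<^sub>v PN \<theta> N (2*n) x (\<tau> l)) $ k)" for x
  proof -
    have "\<forall>l\<in>{1..m}. cmat (Mplus n (A l)) \<in> carrier_mat (2*n) (2*n) \<and> cmat (Mminus n (A l)) \<in> carrier_mat (2*n) (2*n)"
      using A by (auto intro: Mplus_carrier Mminus_carrier)
    have cl: "(cmat (Mplus n (A l)) *\<^sub>v PN \<theta> N (2*n) x (- \<tau> l)
                   + cmat (Mminus n (A l)) *\<^sub>v PN \<theta> N (2*n) x (\<tau> l)) $ k
       = (cmat (Mplus n (A l)) *\<^sub>v PN \<theta> N (2*n) x (- \<tau> l)) $ k
                   + (cmat (Mminus n (A l)) *\<^sub>v PN \<theta> N (2*n) x (\<tau> l)) $ k" if l: "l \<in> {1..m}" for l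
    proof -
      have "A l \<in> carrier_mat n n" using A l by auto
      then have "Mminus n (A l) \<in> carrier_mat (2*n) (2*n)" by (rule Mminus_carrier)
      then have "dim_row (Mminus n (A l)) = 2*n" by simp
      then show ?thesis using k by (intro index_add_vec(1)) simp
    qed
    have e1: "LN_op n m nu ny A B C D \<tau> \<theta> N \<xi> x i = cmat (M0 nu ny (A 0) B C D \<xi>) *\<^sub>v PN \<theta> N (2*n) x 0
       + vsum (2*n) (\<lambda>l. cmat (Mplus n (A l)) *\<^sub>v PN \<theta> N (2*n) x (- \<tau> l)
                        + cmat (Mminus n (A l)) *\<^sub>v PN \<theta> N (2*n) x (\<tau> l)) {1..m}"
      unfolding LN_op_def using True by (simp only: True simp_thms(6) if_True)
    have "LN_op n m nu ny A B C D \<tau> \<theta> N \<xi> x i $ k = (cmat (M0 nu ny (A 0) B C D \<xi>) *\<^sub>v PN \<theta> N (2*n) x 0) $ k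
       + vsum (2*n) (\<lambda>l. cmat (Mplus n (A l)) *\<^sub>v PN \<theta> N (2*n) x (- \<tau> l)
                        + cmat (Mminus n (A l)) *\<^sub>v PN \<theta> N (2*n) x (\<tau> l)) {1..m} $ k"
      unfolding e1 using k by (intro index_add_vec(1)) simp
    also have "vsum (2*n) (\<lambda>l. cmat (Mplus n (A l)) *\<^sub>v PN \<theta> N (2*n) x (- \<tau> l)
                        + cmat (Mminus n (A l)) *\<^sub>v PN \<theta> N (2*n) x (\<tau> l)) {1..m} $ k
      = (\<Sum>l\<in>{1..m}. (cmat (Mplus n (A l)) *\<^sub>v PN \<theta> N (2*n) x (- \<tau> l)) $ k
                   + (cmat (Mminus n (A l)) *\<^sub>v PN \<theta> N (2*n) x (\<tau> l)) $ k)"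
      unfolding index_vsum[OF k] by (rule sum.cong[OF refl], rule cl)
    finally show ?thesis .
  qed
  show ?thesis unfolding eq
  proof (intro is_lin_add is_lin_sum)
    show "is_lin (2 * n) N (\<lambda>x. (cmat (M0 nu ny (A 0) B C D \<xi>) *\<^sub>v PN \<theta> N (2 * n) x 0) $ k)"
      by (rule is_lin_matPN[OF inj k M0])
    fix l assume l: "l \<in> {1..m}"
    then have "A l \<in> carrier_mat n n" using A by auto
    then show "is_lin (2 * n) N (\<lambda>x. (cmat (Mplus n (A l)) *\<^sub>v PN \<theta> N (2 * n) x (- \<tau> l)) $ k)"
      "is_lin (2 * n) N (\<lambda>x. (cmat (Mminus n (A l)) *\<^sub>v PN \<theta> N (2 * n) x (\<tau> l)) $ k)"
      by (auto intro!: is_lin_matPN[OF inj k] Mplus_carrier Mminus_carrier)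
  qed simp
next
  case False
  then show ?thesis unfolding LN_op_def using is_lin_PN_deriv[OF inj k] by simp
qed

lemma dim_LN_mat: "LN_mat n m nu ny A B C D \<tau> \<theta> N \<xi> \<in> carrier_mat (2*n*(2*N+1)) (2*n*(2*N+1))"
  unfolding LN_mat_def Let_def by auto

lemma LN_mat_mult:
  assumes inj: "inj_on \<theta> (Imesh N)" and n: "n > 0"
    and A: "\<forall>i\<in>{0..m}. A i \<in> carrier_mat n n"
    and B: "B \<in> carrier_mat n nu" and C: "C \<in> carrier_mat ny n"
    and w: "w \<in> carrier_vec (2*n*(2*N+1))" and r: "r < 2*n*(2*N+1)"
  shows "(LN_mat n m nu ny A B C D \<tau> \<theta> N \<xi> *\<^sub>v w) $ r
     = LN_op n m nu ny A B C D \<tau> \<theta> N \<xi> (unflatten (2*n) N w) (int (r div (2*n)) - int N) $ (r mod (2*n))"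
proof -
  let ?d = "2*n" let ?K = "2*n*(2*N+1)"
  let ?F = "\<lambda>x. LN_op n m nu ny A B C D \<tau> \<theta> N \<xi> x (int (r div ?d) - int N) $ (r mod ?d)"
  have lin: "is_lin ?d N ?F" by (rule LN_op_lin[OF inj _ A B C]) (use n in simp)
  have rowEq: "row (LN_mat n m nu ny A B C D \<tau> \<theta> N \<xi>) r = vec ?K (\<lambda>c. ?F (unflatten ?d N (unit_vec ?K c)))"
    unfolding LN_mat_def Let_def row_def using r by (intro eq_vecI) (simp_all only: index_mat dim_vec index_vec dim_col_mat case_prod_conv)
  have "(LN_mat n m nu ny A B C D \<tau> \<theta> N \<xi> *\<^sub>v w) $ r = row (LN_mat n m nu ny A B C D \<tau> \<theta> N \<xi>) r \<bullet> w"
  proof (rule index_mult_mat_vec)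
    have "dim_row (LN_mat n m nu ny A B C D \<tau> \<theta> N \<xi>) = ?K" using dim_LN_mat by (rule carrier_matD)
    then show "r < dim_row (LN_mat n m nu ny A B C D \<tau> \<theta> N \<xi>)" using r by (simp only:)
  qed
  also have "\<dots> = vec ?K (\<lambda>c. ?F (unflatten ?d N (unit_vec ?K c))) \<bullet> w" unfolding rowEq ..
  also have "vec ?K (\<lambda>c. ?F (unflatten ?d N (unit_vec ?K c))) \<bullet> w = (\<Sum>c\<in>{0..<?K}. ?F (unflatten ?d N (unit_vec ?K c)) * w $ c)"
    unfolding scalar_prod_def using w by (intro sum.cong) auto
  also have "\<dots> = (\<Sum>c<?K. ?F (unflatten ?d N (unit_vec ?K c)) * w $ c)"
    by (simp add: lessThan_atLeast0)
  also have "\<dots> = ?F (unflatten ?d N w)" by (rule lin_flat[OF lin w])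
  finally show ?thesis .
qed


lemma interp_props:
  assumes inj: "inj_on \<theta> (Imesh N)"
  shows "degree (interp_poly \<theta> N f) \<le> 2*N"
    "\<And>i. i \<in> Imesh N \<Longrightarrow> poly (interp_poly \<theta> N f) (complex_of_real (\<theta> i)) = f i"
proof -
  have d: "degree (\<Sum>j\<in>Imesh N. smult (f j) (lag \<theta> N j)) \<le> 2 * N"
    by (rule degree_sum_le) (auto simp: lag_degree)
  then show "degree (interp_poly \<theta> N f) \<le> 2*N" by (simp add: interp_lag[OF inj])
  fix i assume i: "i \<in> Imesh N"
  have "poly (\<Sum>j\<in>Imesh N. smult (f j) (lag \<theta> N j)) (complex_of_real (\<theta> i))
       = (\<Sum>j\<in>Imesh N. if j = i then f j else 0)"
      unfolding poly_sum by (intro sum.cong) (auto simp: lag_poly[OF inj _ i])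
  also have "\<dots> = f i" using i by (simp add: sum.delta)
  finally show "poly (interp_poly \<theta> N f) (complex_of_real (\<theta> i)) = f i" by (simp add: interp_lag[OF inj])
qed

lemma pN_spec: "\<exists>!p. pN_prop \<theta> N lam p \<Longrightarrow> pN_prop \<theta> N lam (pN \<theta> N lam)"
  unfolding pN_def by (rule theI')

lemma pN_homog:
  assumes ex: "\<exists>!p. pN_prop \<theta> N lam p" and deg: "degree q \<le> 2*N" and q0: "poly q 0 = 0"
    and qd: "\<forall>i\<in>Imesh N - {0}. poly (pderiv q) (complex_of_real (\<theta> i)) = lam * poly q (complex_of_real (\<theta> i))"
  shows "q = 0"
proof -
  let ?p = "pN \<theta> N lam"
  have p: "pN_prop \<theta> N lam ?p" by (rule pN_spec[OF ex])
  have "pN_prop \<theta> N lam (?p + q)"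
    using p deg q0 qd unfolding pN_prop_def
    by (auto simp: pderiv_add distrib_left intro: order_trans[OF degree_add_le_max])
  then have "?p + q = ?p" using ex p by blast
  then show ?thesis by simp
qed

lemma pderiv_map_cnj: "pderiv (map_poly cnj p) = map_poly cnj (pderiv p)"
  by (rule poly_eqI) (simp add: coeff_pderiv coeff_map_poly)

lemma pN_sym:
  assumes ex: "\<exists>!p. pN_prop \<theta> N (\<i> * complex_of_real \<omega>) p"
    and sym: "\<forall>i\<in>{1..int N}. \<theta> (- i) = - \<theta> i" and th0: "\<theta> 0 = 0"
  shows "poly (pN \<theta> N (\<i> * complex_of_real \<omega>)) (complex_of_real t)
       = cnj (poly (pN \<theta> N (\<i> * complex_of_real \<omega>)) (complex_of_real (- t)))"
proof -
  let ?lam = "\<i> * complex_of_real \<omega>"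
  let ?p = "pN \<theta> N ?lam"
  have p: "pN_prop \<theta> N ?lam ?p" by (rule pN_spec[OF ex])
  have sym2: "\<theta> (- i) = - \<theta> i" if "i \<in> Imesh N" for i
  proof -
    have "i = 0 \<or> i \<in> {1..int N} \<or> - i \<in> {1..int N}" using that by auto
    then consider "i = 0" | "i \<in> {1..int N}" | "- i \<in> {1..int N}" by blast
    then show ?thesis
    proof cases
      case 3
      then have "\<theta> (- (- i)) = - \<theta> (- i)" using sym by blast
      then show ?thesis by simp
    qed (use th0 sym in auto)
  qed
  define q where "q = map_poly cnj (?p \<circ>\<^sub>p [:0, -1:])"
  have polyq: "poly q z = cnj (poly ?p (- cnj z))" for z
    unfolding q_def by (simp add: poly_map_poly_cnj poly_pcompose)
  have pdq: "pderiv q = map_poly cnj ((pderiv ?p \<circ>\<^sub>p [:0, -1:]) * [:-1:])"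
  proof -
    have "pderiv [:0, -1::complex:] = [:-1:]" by (simp add: pderiv_pCons)
    then show ?thesis unfolding q_def pderiv_map_cnj pderiv_pcompose by simp
  qed
  have polydq: "poly (pderiv q) z = - cnj (poly (pderiv ?p) (- cnj z))" for z
    unfolding pdq by (simp add: poly_map_poly_cnj poly_pcompose)
  have "pN_prop \<theta> N ?lam q"
    unfolding pN_prop_def
  proof (intro conjI ballI)
    have "degree q \<le> degree (?p \<circ>\<^sub>p [:0, -1:])" unfolding q_def by (rule degree_map_poly_le)
    also have "\<dots> = degree ?p" by (simp add: degree_pcompose)
    finally show "degree q \<le> 2 * N" using p unfolding pN_prop_def by simp
    show "poly q 0 = 1" using p unfolding polyq pN_prop_def by simp
    fix i assume i: "i \<in> Imesh N - {0}"
    then have mi: "- i \<in> Imesh N - {0}" by auto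
    have "poly (pderiv ?p) (complex_of_real (\<theta> (- i))) = ?lam * poly ?p (complex_of_real (\<theta> (- i)))"
      using p mi unfolding pN_prop_def by blast
    then have "poly (pderiv ?p) (- complex_of_real (\<theta> i)) = ?lam * poly ?p (- complex_of_real (\<theta> i))"
      using sym2[of i] i by simp
    then show "poly (pderiv q) (complex_of_real (\<theta> i)) = ?lam * poly q (complex_of_real (\<theta> i))"
      unfolding polydq polyq by simp
  qed
  then have "q = ?p" using ex p by blast
  then have "poly ?p (complex_of_real t) = poly q (complex_of_real t)" by simp
  also have "\<dots> = cnj (poly ?p (complex_of_real (- t)))" unfolding polyq by simp
  finally show ?thesis .
qed


definition Hop :: "nat \<Rightarrow> nat \<Rightarrow> nat \<Rightarrow> nat \<Rightarrow> (nat \<Rightarrow> real mat) \<Rightarrow> real mat \<Rightarrow> real mat \<Rightarrow> real mat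
     \<Rightarrow> (nat \<Rightarrow> real) \<Rightarrow> real \<Rightarrow> complex poly \<Rightarrow> complex vec \<Rightarrow> complex vec" where
  "Hop n m nu ny A B C D \<tau> \<xi> p v = cmat (M0 nu ny (A 0) B C D \<xi>) *\<^sub>v v
     + vsum (2*n) (\<lambda>l. poly p (complex_of_real (- \<tau> l)) \<cdot>\<^sub>v (cmat (Mplus n (A l)) *\<^sub>v v)
        + cnj (poly p (complex_of_real (- \<tau> l))) \<cdot>\<^sub>v (cmat (Mminus n (A l)) *\<^sub>v v)) {1..m}"

lemma vsum_cong: "(\<And>l. l \<in> S \<Longrightarrow> f l = g l) \<Longrightarrow> vsum d f S = vsum d g S"
  unfolding vsum_def by simp

lemma PN_pv:
  assumes "\<forall>k<d. interp_poly \<theta> N (\<lambda>i. x i $ k) = smult (v $ k) p" and v: "v \<in> carrier_vec d"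
  shows "PN \<theta> N d x t = poly p (complex_of_real t) \<cdot>\<^sub>v v"
    "PN_deriv \<theta> N d x t = poly (pderiv p) (complex_of_real t) \<cdot>\<^sub>v v"
proof -
  have dv: "dim_vec v = d" using v by simp
  show "PN \<theta> N d x t = poly p (complex_of_real t) \<cdot>\<^sub>v v"
  proof (rule eq_vecI)
    fix k assume "k < dim_vec (poly p (complex_of_real t) \<cdot>\<^sub>v v)"
    then have k: "k < d" using dv by simp
    then have "interp_poly \<theta> N (\<lambda>i. x i $ k) = smult (v $ k) p" using assms(1) by blast
    then show "PN \<theta> N d x t $ k = (poly p (complex_of_real t) \<cdot>\<^sub>v v) $ k"
      unfolding PN_def using k dv by simp
  qed (simp add: dv)
  show "PN_deriv \<theta> N d x t = poly (pderiv p) (complex_of_real t) \<cdot>\<^sub>v v"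
  proof (rule eq_vecI)
    fix k assume "k < dim_vec (poly (pderiv p) (complex_of_real t) \<cdot>\<^sub>v v)"
    then have k: "k < d" using dv by simp
    then have "interp_poly \<theta> N (\<lambda>i. x i $ k) = smult (v $ k) p" using assms(1) by blast
    then show "PN_deriv \<theta> N d x t $ k = (poly (pderiv p) (complex_of_real t) \<cdot>\<^sub>v v) $ k"
      unfolding PN_deriv_def using k dv by (simp add: pderiv_smult)
  qed (simp add: dv)
qed

lemma LN_op_pv:
  assumes ip: "\<forall>k<2*n. interp_poly \<theta> N (\<lambda>i. x i $ k) = smult (v $ k) p" and v: "v \<in> carrier_vec (2*n)"
    and p0: "poly p 0 = 1"
    and psym: "\<forall>l\<in>{1..m}. poly p (complex_of_real (\<tau> l)) = cnj (poly p (complex_of_real (- \<tau> l)))"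
    and A: "\<forall>i\<in>{0..m}. A i \<in> carrier_mat n n"
    and B: "B \<in> carrier_mat n nu" and C: "C \<in> carrier_mat ny n"
  shows "LN_op n m nu ny A B C D \<tau> \<theta> N \<xi> x 0 = Hop n m nu ny A B C D \<tau> \<xi> p v"
    "i \<noteq> 0 \<Longrightarrow> LN_op n m nu ny A B C D \<tau> \<theta> N \<xi> x i = poly (pderiv p) (complex_of_real (\<theta> i)) \<cdot>\<^sub>v v"
proof -
  note PN = PN_pv[OF ip v]
  have e0: "PN \<theta> N (2*n) x 0 = v" unfolding PN(1)[of 0] using p0 v by simp
  have el: "cmat (Mplus n (A l)) *\<^sub>v PN \<theta> N (2*n) x (- \<tau> l)
                        + cmat (Mminus n (A l)) *\<^sub>v PN \<theta> N (2*n) x (\<tau> l)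
     = poly p (complex_of_real (- \<tau> l)) \<cdot>\<^sub>v (cmat (Mplus n (A l)) *\<^sub>v v)
        + cnj (poly p (complex_of_real (- \<tau> l))) \<cdot>\<^sub>v (cmat (Mminus n (A l)) *\<^sub>v v)" if l: "l \<in> {1..m}" for l
  proof -
    have Al: "A l \<in> carrier_mat n n" using A l by auto
    have c1: "cmat (Mplus n (A l)) \<in> carrier_mat (2*n) (2*n)" using Mplus_carrier[OF Al] by simp
    have c2: "cmat (Mminus n (A l)) \<in> carrier_mat (2*n) (2*n)" using Mminus_carrier[OF Al] by simp
    have ps: "poly p (complex_of_real (\<tau> l)) = cnj (poly p (complex_of_real (- \<tau> l)))" using psym l by blast
    show ?thesis by (simp only: PN mult_mat_vec[OF c1 v] mult_mat_vec[OF c2 v] ps)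
  qed
  show "LN_op n m nu ny A B C D \<tau> \<theta> N \<xi> x 0 = Hop n m nu ny A B C D \<tau> \<xi> p v"
    unfolding LN_op_def Hop_def e0 by (simp only: simp_thms(6) if_True vsum_cong[OF el])
  show "i \<noteq> 0 \<Longrightarrow> LN_op n m nu ny A B C D \<tau> \<theta> N \<xi> x i = poly (pderiv p) (complex_of_real (\<theta> i)) \<cdot>\<^sub>v v"
    unfolding LN_op_def PN by (simp only: if_False)
qed

lemma Hop_carrier: "Hop n m nu ny A B C D \<tau> \<xi> p v \<in> carrier_vec (2*n)"
  unfolding Hop_def by (rule carrier_vecI) (simp only: index_add_vec(2) dim_vsum)


lemma idx_fwd:
  assumes d: "d > 0" and i: "i \<in> Imesh N" and k: "k < d"
  shows "nat (i + int N) * d + k < d * (2*N+1)" "(nat (i + int N) * d + k) div d = nat (i + int N)"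
    "(nat (i + int N) * d + k) mod d = k" "int ((nat (i + int N) * d + k) div d) - int N = i"
proof -
  have "nat (i + int N) \<le> 2*N" using i by auto
  then have "nat (i + int N) * d \<le> 2*N*d" by (rule mult_le_mono1)
  moreover have "d * (2*N+1) = 2*N*d + d" by (simp add: algebra_simps)
  ultimately show "nat (i + int N) * d + k < d * (2*N+1)" using k by linarith
  show dv: "(nat (i + int N) * d + k) div d = nat (i + int N)" using d k by simp
  show "(nat (i + int N) * d + k) mod d = k" using d k by simp
  show "int ((nat (i + int N) * d + k) div d) - int N = i" unfolding dv using i by simp
qed

lemma idx_bwd:
  assumes d: "d > 0" and r: "r < d * (2*N+1)"
  shows "int (r div d) - int N \<in> Imesh N" "nat (int (r div d) - int N + int N) * d + r mod d = r"
    "r mod d < d"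
proof -
  have "r div d < 2*N+1" using r d by (simp add: div_less_iff_less_mult mult.commute)
  then show "int (r div d) - int N \<in> Imesh N" by auto
  show "nat (int (r div d) - int N + int N) * d + r mod d = r" by simp
  show "r mod d < d" using d by simp
qed

lemma eig_iff_Hop:
  fixes lam :: complex
  assumes inj: "inj_on \<theta> (Imesh N)" and n: "n > 0"
    and A: "\<forall>i\<in>{0..m}. A i \<in> carrier_mat n n"
    and B: "B \<in> carrier_mat n nu" and C: "C \<in> carrier_mat ny n"
    and th0: "\<theta> 0 = 0" and ex: "\<exists>!p. pN_prop \<theta> N lam p"
    and psym: "\<forall>l\<in>{1..m}. poly (pN \<theta> N lam) (complex_of_real (\<tau> l)) = cnj (poly (pN \<theta> N lam) (complex_of_real (- \<tau> l)))"
  shows "eigenvalue (LN_mat n m nu ny A B C D \<tau> \<theta> N \<xi>) lam \<longleftrightarrow>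
     (\<exists>v. v \<in> carrier_vec (2*n) \<and> v \<noteq> 0\<^sub>v (2*n) \<and> Hop n m nu ny A B C D \<tau> \<xi> (pN \<theta> N lam) v = lam \<cdot>\<^sub>v v)"
proof -
  let ?p = "pN \<theta> N lam"
  let ?d = "2*n" let ?K = "2*n*(2*N+1)"
  let ?L = "LN_mat n m nu ny A B C D \<tau> \<theta> N \<xi>"
  have d: "?d > 0" using n by simp
  have pp: "pN_prop \<theta> N lam ?p" by (rule pN_spec[OF ex])
  then have p0: "poly ?p 0 = 1" and pdeg: "degree ?p \<le> 2*N"
    and pd: "\<forall>i\<in>Imesh N - {0}. poly (pderiv ?p) (complex_of_real (\<theta> i)) = lam * poly ?p (complex_of_real (\<theta> i))"
    unfolding pN_prop_def by auto
  have dimL: "dim_row ?L = ?K" using dim_LN_mat by (rule carrier_matD)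
  show ?thesis
  proof
    assume "eigenvalue ?L lam"
    then obtain w where w: "w \<in> carrier_vec ?K" and w0: "w \<noteq> 0\<^sub>v ?K" and Lw: "?L *\<^sub>v w = lam \<cdot>\<^sub>v w"
      unfolding eigenvalue_def eigenvector_def dimL by blast
    define x where "x = unflatten ?d N w"
    have xv: "x i $ k = w $ (nat (i + int N) * ?d + k)" if "k < ?d" for i k
      unfolding x_def unflatten_def using that by simp
    have Lx: "LN_op n m nu ny A B C D \<tau> \<theta> N \<xi> x i $ k = lam * x i $ k" if i: "i \<in> Imesh N" and k: "k < ?d" for i k
    proof -
      let ?r = "nat (i + int N) * ?d + k"
      note ix = idx_fwd[OF d i k]
      have r: "?r < ?K" using ix(1) by (simp add: mult.commute)
      have "(?L *\<^sub>v w) $ ?r = LN_op n m nu ny A B C D \<tau> \<theta> N \<xi> x i $ k"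
        unfolding x_def LN_mat_mult[OF inj n A B C w r] ix(3) ix(4) ..
      moreover have "(?L *\<^sub>v w) $ ?r = lam * x i $ k" unfolding Lw xv[OF k] using w r by simp
      ultimately show ?thesis by simp
    qed
    have ip: "interp_poly \<theta> N (\<lambda>i. x i $ k) = smult (x 0 $ k) ?p" if k: "k < ?d" for k
    proof -
      let ?P = "interp_poly \<theta> N (\<lambda>i. x i $ k)"
      note P = interp_props[OF inj, where f = "\<lambda>i. x i $ k"]
      have P0: "poly ?P 0 = x 0 $ k" using P(2)[of 0] th0 by simp
      have "?P - smult (x 0 $ k) ?p = 0"
      proof (rule pN_homog[OF ex])
        show "degree (?P - smult (x 0 $ k) ?p) \<le> 2 * N"
          using P(1) pdeg by (meson degree_diff_le degree_smult_le order_trans)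
        show "poly (?P - smult (x 0 $ k) ?p) 0 = 0" using P0 p0 by simp
        show "\<forall>i\<in>Imesh N - {0}. poly (pderiv (?P - smult (x 0 $ k) ?p)) (complex_of_real (\<theta> i)) =
           lam * poly (?P - smult (x 0 $ k) ?p) (complex_of_real (\<theta> i))"
        proof
          fix i assume i: "i \<in> Imesh N - {0}"
          have "poly (pderiv ?P) (complex_of_real (\<theta> i)) = PN_deriv \<theta> N ?d x (\<theta> i) $ k"
            unfolding PN_deriv_def using k by simp
          also have "\<dots> = LN_op n m nu ny A B C D \<tau> \<theta> N \<xi> x i $ k" using i unfolding LN_op_def by simp
          also have "\<dots> = lam * x i $ k" using Lx[of i k] i k by simp
          also have "\<dots> = lam * poly ?P (complex_of_real (\<theta> i))" using P(2)[of i] i by simp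
          finally have e: "poly (pderiv ?P) (complex_of_real (\<theta> i)) = lam * poly ?P (complex_of_real (\<theta> i))" .
          show "poly (pderiv (?P - smult (x 0 $ k) ?p)) (complex_of_real (\<theta> i)) =
           lam * poly (?P - smult (x 0 $ k) ?p) (complex_of_real (\<theta> i))"
            using e pd i by (simp add: pderiv_diff pderiv_smult algebra_simps)
        qed
      qed
      then show ?thesis by simp
    qed
    define v where "v = x 0"
    have v: "v \<in> carrier_vec ?d" unfolding v_def x_def unflatten_def by simp
    have ipv: "\<forall>k<?d. interp_poly \<theta> N (\<lambda>i. x i $ k) = smult (v $ k) ?p" using ip v_def by simp
    have H: "Hop n m nu ny A B C D \<tau> \<xi> ?p v = LN_op n m nu ny A B C D \<tau> \<theta> N \<xi> x 0"
      using LN_op_pv(1)[OF ipv v p0 psym A B C] by simp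
    have Hv: "Hop n m nu ny A B C D \<tau> \<xi> ?p v = lam \<cdot>\<^sub>v v"
    proof (rule eq_vecI)
      fix k assume "k < dim_vec (lam \<cdot>\<^sub>v v)"
      then have k: "k < ?d" using v by simp
      show "Hop n m nu ny A B C D \<tau> \<xi> ?p v $ k = (lam \<cdot>\<^sub>v v) $ k"
        unfolding H using Lx[of 0 k] k v unfolding v_def by simp
    qed (use v Hop_carrier in simp)
    have "v \<noteq> 0\<^sub>v ?d"
    proof
      assume v0: "v = 0\<^sub>v ?d"
      have "w = 0\<^sub>v ?K"
      proof (rule eq_vecI)
        fix r assume "r < dim_vec (0\<^sub>v ?K :: complex vec)"
        then have r: "r < ?d * (2*N+1)" by (simp add: mult.commute)
        note ib = idx_bwd[OF d r]
        let ?i = "int (r div ?d) - int N"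
        have "w $ r = x ?i $ (r mod ?d)" unfolding xv[OF ib(3)] ib(2) ..
        also have "\<dots> = poly (smult (v $ (r mod ?d)) ?p) (complex_of_real (\<theta> ?i))"
          using interp_props(2)[OF inj ib(1), where f = "\<lambda>i. x i $ (r mod ?d)"] ipv ib(3) by simp
        also have "\<dots> = 0" using v0 ib(3) by simp
        finally show "w $ r = 0\<^sub>v ?K $ r" using r by (simp add: mult.commute)
      qed (use w in simp)
      then show False using w0 by simp
    qed
    then show "\<exists>v. v \<in> carrier_vec ?d \<and> v \<noteq> 0\<^sub>v ?d \<and> Hop n m nu ny A B C D \<tau> \<xi> ?p v = lam \<cdot>\<^sub>v v"
      using v Hv by blast
  next
    assume "\<exists>v. v \<in> carrier_vec ?d \<and> v \<noteq> 0\<^sub>v ?d \<and> Hop n m nu ny A B C D \<tau> \<xi> ?p v = lam \<cdot>\<^sub>v v"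
    then obtain v where v: "v \<in> carrier_vec ?d" and v0: "v \<noteq> 0\<^sub>v ?d" and Hv: "Hop n m nu ny A B C D \<tau> \<xi> ?p v = lam \<cdot>\<^sub>v v"
      by blast
    define w where "w = vec ?K (\<lambda>r. poly ?p (complex_of_real (\<theta> (int (r div ?d) - int N))) * v $ (r mod ?d))"
    define x where "x = unflatten ?d N w"
    have w: "w \<in> carrier_vec ?K" unfolding w_def by simp
    have xv: "x i $ k = poly ?p (complex_of_real (\<theta> i)) * v $ k" if i: "i \<in> Imesh N" and k: "k < ?d" for i k
    proof -
      note ix = idx_fwd[OF d i k]
      have r: "nat (i + int N) * ?d + k < ?K" using ix(1) by (simp add: mult.commute)
      show ?thesis unfolding x_def unflatten_def w_def using k r ix(3,4) by simp
    qed
    have ipv: "\<forall>k<?d. interp_poly \<theta> N (\<lambda>i. x i $ k) = smult (v $ k) ?p"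
    proof (intro allI impI)
      fix k assume k: "k < ?d"
      show "interp_poly \<theta> N (\<lambda>i. x i $ k) = smult (v $ k) ?p"
        by (rule interp_unique[OF inj]) (use pdeg xv k in \<open>auto intro: order_trans[OF degree_smult_le]\<close>)
    qed
    have Lx: "LN_op n m nu ny A B C D \<tau> \<theta> N \<xi> x i $ k = lam * x i $ k" if i: "i \<in> Imesh N" and k: "k < ?d" for i k
    proof (cases "i = 0")
      case True
      then show ?thesis using LN_op_pv(1)[OF ipv v p0 psym A B C] Hv xv[OF i k] th0 p0 k v by simp
    next
      case False
      have "LN_op n m nu ny A B C D \<tau> \<theta> N \<xi> x i $ k = poly (pderiv ?p) (complex_of_real (\<theta> i)) * v $ k"
        using LN_op_pv(2)[OF ipv v p0 psym A B C False] k v by simp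
      also have "\<dots> = lam * x i $ k" using pd i False xv[OF i k] by simp
      finally show ?thesis .
    qed
    have Lw: "?L *\<^sub>v w = lam \<cdot>\<^sub>v w"
    proof (rule eq_vecI)
      fix r assume "r < dim_vec (lam \<cdot>\<^sub>v w)"
      then have r: "r < ?K" using w by simp
      then have r': "r < ?d * (2*N+1)" by (simp add: mult.commute)
      note ib = idx_bwd[OF d r']
      let ?i = "int (r div ?d) - int N"
      have "(?L *\<^sub>v w) $ r = LN_op n m nu ny A B C D \<tau> \<theta> N \<xi> x ?i $ (r mod ?d)"
        unfolding x_def by (rule LN_mat_mult[OF inj n A B C w r])
      also have "\<dots> = lam * x ?i $ (r mod ?d)" by (rule Lx[OF ib(1) ib(3)])
      also have "x ?i $ (r mod ?d) = w $ r" unfolding x_def unflatten_def using ib(2,3) by simp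
      finally show "(?L *\<^sub>v w) $ r = (lam \<cdot>\<^sub>v w) $ r" using r w by simp
    qed (use w dimL in simp)
    have "w \<noteq> 0\<^sub>v ?K"
    proof
      assume w0: "w = 0\<^sub>v ?K"
      have "v = 0\<^sub>v ?d"
      proof (rule eq_vecI)
        fix k assume "k < dim_vec (0\<^sub>v ?d :: complex vec)"
        then have k: "k < ?d" by simp
        have i0: "(0::int) \<in> Imesh N" by simp
        have "v $ k = x 0 $ k" using xv[OF i0 k] th0 p0 by simp
        also have "\<dots> = 0" unfolding x_def unflatten_def w0 using k idx_fwd(1)[OF d i0 k]
          by (simp add: mult.commute)
        finally show "v $ k = 0\<^sub>v ?d $ k" using k by simp
      qed (use v in simp)
      then show False using v0 by simp
    qed
    then show "eigenvalue ?L lam" unfolding eigenvalue_def eigenvector_def dimL using w Lw by blast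
  qed
qed


lemma vec_eq_idx: "u \<in> carrier_vec n \<Longrightarrow> v \<in> carrier_vec n \<Longrightarrow> (u = v) = (\<forall>i<n. u $ i = v $ i)"
  by (auto intro!: eq_vecI)

lemma mv_uminus: assumes "A \<in> carrier_mat nr nc" "v \<in> carrier_vec nc"
  shows "A *\<^sub>v (- v) = - (A *\<^sub>v (v :: 'a :: comm_ring_1 vec))"
  using assms by (intro eq_vecI) (auto simp: scalar_prod_def sum_negf)

lemma smult_mat_mv: assumes "A \<in> carrier_mat nr nc" "v \<in> carrier_vec nc"
  shows "(s \<cdot>\<^sub>m A) *\<^sub>v v = s \<cdot>\<^sub>v (A *\<^sub>v (v :: 'a :: comm_ring_1 vec))"
  using assms by (intro eq_vecI) (auto simp: scalar_prod_def sum_distrib_left mult.assoc)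

lemma minus_mat_mv: assumes "A \<in> carrier_mat nr nc" "B \<in> carrier_mat nr nc" "v \<in> carrier_vec nc"
  shows "(A - B) *\<^sub>v v = A *\<^sub>v v - B *\<^sub>v (v :: 'a :: comm_ring_1 vec)"
  using assms by (intro eq_vecI) (auto simp: scalar_prod_def sum_subtractf left_diff_distrib)

lemma adj_dims[simp]: "dim_row (mat_adjoint A) = dim_col A" "dim_col (mat_adjoint A) = dim_row A"
  unfolding mat_adjoint_def by auto

lemma adj_index[simp]: "i < dim_col A \<Longrightarrow> j < dim_row A \<Longrightarrow> mat_adjoint A $$ (i, j) = conjugate (A $$ (j, i))"
  unfolding mat_adjoint_def by (simp add: mat_of_rows_index)

lemma adj_carrier[simp]: "A \<in> carrier_mat a b \<Longrightarrow> mat_adjoint A \<in> carrier_mat b a"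
  unfolding carrier_mat_def by simp

lemma adj_mult: fixes A B :: "complex mat"
  assumes "A \<in> carrier_mat a b" "B \<in> carrier_mat b c"
  shows "mat_adjoint (A * B) = mat_adjoint B * mat_adjoint A"
  using assms by (intro eq_matI) (auto simp: scalar_prod_def mult.commute)

lemma adj_add: fixes A B :: "complex mat"
  assumes "A \<in> carrier_mat a b" "B \<in> carrier_mat a b"
  shows "mat_adjoint (A + B) = mat_adjoint A + mat_adjoint B"
  using assms by (intro eq_matI) auto

lemma adj_one: "mat_adjoint (1\<^sub>m n :: complex mat) = 1\<^sub>m n"
  by (intro eq_matI) auto

lemma adj_cmat: "mat_adjoint (cmat M) = cmat (transpose_mat M)"
  unfolding cmat_def by (intro eq_matI) auto

lemma vsum3_0_iff1: fixes a b c :: "'a :: ab_group_add vec"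
  assumes "a \<in> carrier_vec n" "b \<in> carrier_vec n" "c \<in> carrier_vec n"
  shows "(a + b + c = 0\<^sub>v n) \<longleftrightarrow> (a = - (b + c))"
proof -
  have "(a + b + c = 0\<^sub>v n) \<longleftrightarrow> (\<forall>i<n. (a + b + c) $ i = 0\<^sub>v n $ i)"
    by (rule vec_eq_idx) (use assms in auto)
  also have "\<dots> \<longleftrightarrow> (\<forall>i<n. a $ i = (- (b + c)) $ i)"
    using assms by (auto simp: add_eq_0_iff2 add.assoc eq_neg_iff_add_eq_0)
  also have "\<dots> \<longleftrightarrow> (a = - (b + c))"
    by (rule vec_eq_idx[symmetric]) (use assms in auto)
  finally show ?thesis .
qed

lemma vsum3_0_iff2: fixes a b c :: "'a :: ab_group_add vec"
  assumes "a \<in> carrier_vec n" "b \<in> carrier_vec n" "c \<in> carrier_vec n"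
  shows "(a + b + c = 0\<^sub>v n) \<longleftrightarrow> (b = - a - c)"
proof -
  have "(a + b + c = 0\<^sub>v n) \<longleftrightarrow> (\<forall>i<n. (a + b + c) $ i = 0\<^sub>v n $ i)"
    by (rule vec_eq_idx) (use assms in auto)
  also have "\<dots> \<longleftrightarrow> (\<forall>i<n. b $ i = (- a - c) $ i)"
    using assms by (auto simp: algebra_simps eq_neg_iff_add_eq_0 diff_eq_eq)
  also have "\<dots> \<longleftrightarrow> (b = - a - c)"
    by (rule vec_eq_idx[symmetric]) (use assms in auto)
  finally show ?thesis .
qed

lemma vec_lin1: fixes a b d e :: "'a :: ab_group_add vec"
  assumes "a \<in> carrier_vec n" "b \<in> carrier_vec n" "d \<in> carrier_vec n" "e \<in> carrier_vec n"
    and "d - e = - (a + b)"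
  shows "b + (a + d) = e"
proof -
  have "\<forall>i<n. (d - e) $ i = (- (a + b)) $ i" using assms(5) by simp
  then have "\<forall>i<n. (b + (a + d)) $ i = e $ i" using assms(1-4) by (auto simp: algebra_simps)
  then show ?thesis using assms(1-4) by (auto intro!: eq_vecI)
qed

lemma vec_lin2: fixes a b d e :: "'a :: ab_group_add vec"
  assumes "a \<in> carrier_vec n" "b \<in> carrier_vec n" "d \<in> carrier_vec n" "e \<in> carrier_vec n"
    and "b + (a + d) = e"
  shows "d - e = - (a + b)"
proof -
  have "\<forall>i<n. (b + (a + d)) $ i = e $ i" using assms(5) by simp
  then have "\<forall>i<n. (d - e) $ i = (- (a + b)) $ i" using assms(1-4) by (auto simp: algebra_simps)
  then show ?thesis using assms(1-4) by (auto intro!: eq_vecI)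
qed

lemma mv_zero: "A \<in> carrier_mat nr nc \<Longrightarrow> A *\<^sub>v 0\<^sub>v nc = (0\<^sub>v nr :: 'a :: comm_ring_1 vec)"
  by (intro eq_vecI) (auto simp: scalar_prod_def)


lemma ham_sv:
  fixes Kc Ki Bc Cc Dc Xc Yc :: "complex mat" and s :: complex
  assumes K: "Kc \<in> carrier_mat n n" and Ki: "Ki \<in> carrier_mat n n"
    and KKi: "Kc * Ki = 1\<^sub>m n" and KiK: "Ki * Kc = 1\<^sub>m n"
    and B: "Bc \<in> carrier_mat n nu" and C: "Cc \<in> carrier_mat ny n" and D: "Dc \<in> carrier_mat ny nu"
    and X: "Xc \<in> carrier_mat nu nu" and Y: "Yc \<in> carrier_mat ny ny"
    and XD: "Xc * (mat_adjoint Dc * Dc - s \<cdot>\<^sub>m 1\<^sub>m nu) = 1\<^sub>m nu"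
    and DX: "(mat_adjoint Dc * Dc - s \<cdot>\<^sub>m 1\<^sub>m nu) * Xc = 1\<^sub>m nu"
    and DXD: "Dc * Xc * mat_adjoint Dc = 1\<^sub>m ny + s \<cdot>\<^sub>m Yc"
  shows "(\<exists>x y. x \<in> carrier_vec n \<and> y \<in> carrier_vec n \<and> (x \<noteq> 0\<^sub>v n \<or> y \<noteq> 0\<^sub>v n) \<and>
          Kc *\<^sub>v x + Bc *\<^sub>v (Xc *\<^sub>v (mat_adjoint Dc *\<^sub>v (Cc *\<^sub>v x))) + Bc *\<^sub>v (Xc *\<^sub>v (mat_adjoint Bc *\<^sub>v y)) = 0\<^sub>v n \<and>
          s \<cdot>\<^sub>v (mat_adjoint Cc *\<^sub>v (Yc *\<^sub>v (Cc *\<^sub>v x))) + mat_adjoint Kc *\<^sub>v y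
            + mat_adjoint Cc *\<^sub>v (Dc *\<^sub>v (Xc *\<^sub>v (mat_adjoint Bc *\<^sub>v y))) = 0\<^sub>v n)
     \<longleftrightarrow> (\<exists>u. u \<in> carrier_vec nu \<and> u \<noteq> 0\<^sub>v nu \<and>
          (mat_adjoint (Cc * Ki * Bc + Dc) * (Cc * Ki * Bc + Dc)) *\<^sub>v u = s \<cdot>\<^sub>v u)"
proof -
  let ?aD = "mat_adjoint Dc" and ?aB = "mat_adjoint Bc" and ?aC = "mat_adjoint Cc"
  let ?aK = "mat_adjoint Kc" and ?aKi = "mat_adjoint Ki"
  let ?G = "Cc * Ki * Bc + Dc"
  let ?Dx = "mat_adjoint Dc * Dc - s \<cdot>\<^sub>m 1\<^sub>m nu"
  have aD: "?aD \<in> carrier_mat nu ny" and aB: "?aB \<in> carrier_mat nu n" and aC: "?aC \<in> carrier_mat n ny"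
    and aK: "?aK \<in> carrier_mat n n" and aKi: "?aKi \<in> carrier_mat n n"
    using D B C K Ki by auto
  have Dx: "?Dx \<in> carrier_mat nu nu" using aD D by auto
  have G: "?G \<in> carrier_mat ny nu" using C Ki B D by auto
  have aG: "mat_adjoint ?G = ?aB * ?aKi * ?aC + ?aD"
  proof -
    have "mat_adjoint ?G = mat_adjoint (Cc * Ki * Bc) + ?aD"
      by (rule adj_add) (use C Ki B D in auto)
    also have "mat_adjoint (Cc * Ki * Bc) = ?aB * mat_adjoint (Cc * Ki)"
      by (rule adj_mult) (use C Ki B in auto)
    also have "mat_adjoint (Cc * Ki) = ?aKi * ?aC" by (rule adj_mult[OF C Ki])
    finally show ?thesis using aB aKi aC by (simp add: assoc_mult_mat[OF aB aKi aC])
  qed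
  have aKiK: "?aKi * ?aK = 1\<^sub>m n" using adj_mult[OF K Ki] KKi adj_one by simp
  have aKKi: "?aK * ?aKi = 1\<^sub>m n" using adj_mult[OF Ki K] KiK adj_one by simp
  define w1 where "w1 x = ?aD *\<^sub>v (Cc *\<^sub>v x)" for x
  define w2 where "w2 y = ?aB *\<^sub>v y" for y
  define u where "u x y = - (Xc *\<^sub>v (w1 x + w2 y))" for x y
  define z where "z x y = Cc *\<^sub>v x + Dc *\<^sub>v u x y" for x y
  have w1c: "w1 x \<in> carrier_vec nu" for x unfolding w1_def using D by (intro carrier_vecI) (simp add: carrier_matD)
  have w2c: "w2 y \<in> carrier_vec nu" for y unfolding w2_def using B by (intro carrier_vecI) (simp add: carrier_matD)
  have uc: "u x y \<in> carrier_vec nu" for x y unfolding u_def using X by (intro carrier_vecI) (simp add: carrier_matD)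
  have zc: "z x y \<in> carrier_vec ny" for x y unfolding z_def using C D by (intro carrier_vecI) (simp add: carrier_matD)
  have Xw: "Xc *\<^sub>v (w1 x + w2 y) = Xc *\<^sub>v w1 x + Xc *\<^sub>v w2 y" for x y
    by (rule mult_add_distrib_mat_vec[OF X w1c w2c])
  have Bu: "Bc *\<^sub>v u x y = - (Bc *\<^sub>v (Xc *\<^sub>v w1 x) + Bc *\<^sub>v (Xc *\<^sub>v w2 y))" for x y
  proof -
    have Xc1: "Xc *\<^sub>v w1 x \<in> carrier_vec nu" "Xc *\<^sub>v w2 y \<in> carrier_vec nu" using X w1c w2c by auto
    have "Bc *\<^sub>v u x y = - (Bc *\<^sub>v (Xc *\<^sub>v w1 x + Xc *\<^sub>v w2 y))" unfolding u_def Xw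
      by (rule mv_uminus[OF B]) (use Xc1 in simp)
    then show ?thesis unfolding mult_add_distrib_mat_vec[OF B Xc1] .
  qed
  have Du: "Dc *\<^sub>v u x y = - (Dc *\<^sub>v (Xc *\<^sub>v w1 x) + Dc *\<^sub>v (Xc *\<^sub>v w2 y))" for x y
  proof -
    have Xc1: "Xc *\<^sub>v w1 x \<in> carrier_vec nu" "Xc *\<^sub>v w2 y \<in> carrier_vec nu" using X w1c w2c by auto
    have "Dc *\<^sub>v u x y = - (Dc *\<^sub>v (Xc *\<^sub>v w1 x + Xc *\<^sub>v w2 y))" unfolding u_def Xw
      by (rule mv_uminus[OF D]) (use Xc1 in simp)
    then show ?thesis unfolding mult_add_distrib_mat_vec[OF D Xc1] .
  qed
  have F2: "Dc *\<^sub>v (Xc *\<^sub>v w1 x) = Cc *\<^sub>v x + s \<cdot>\<^sub>v (Yc *\<^sub>v (Cc *\<^sub>v x))" if x: "x \<in> carrier_vec n" for x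
  proof -
    have Cx: "Cc *\<^sub>v x \<in> carrier_vec ny" using C x by simp
    have "Dc *\<^sub>v (Xc *\<^sub>v w1 x) = (Dc * Xc * ?aD) *\<^sub>v (Cc *\<^sub>v x)"
    proof -
      have DXc: "Dc * Xc \<in> carrier_mat ny nu" using D X by simp
      have aDC: "?aD *\<^sub>v (Cc *\<^sub>v x) \<in> carrier_vec nu" using aD Cx by simp
      show ?thesis unfolding w1_def assoc_mult_mat_vec[OF DXc aD Cx] assoc_mult_mat_vec[OF D X aDC] ..
    qed
    also have "\<dots> = Cc *\<^sub>v x + s \<cdot>\<^sub>v (Yc *\<^sub>v (Cc *\<^sub>v x))" unfolding DXD
      using Cx Y by (simp add: add_mult_distrib_mat_vec[of _ ny ny] smult_mat_mv[OF Y])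
    finally show ?thesis .
  qed
  have F4: "?aD *\<^sub>v (Dc *\<^sub>v u x y) - s \<cdot>\<^sub>v u x y = - (w1 x + w2 y)" for x y
  proof -
    have aDD: "?aD * Dc \<in> carrier_mat nu nu" by (rule mult_carrier_mat[OF aD D])
    have sI: "s \<cdot>\<^sub>m 1\<^sub>m nu \<in> carrier_mat nu nu" by simp
    have "?Dx *\<^sub>v u x y = (?aD * Dc) *\<^sub>v u x y - (s \<cdot>\<^sub>m 1\<^sub>m nu) *\<^sub>v u x y"
      by (rule minus_mat_mv[OF aDD sI uc])
    also have "(?aD * Dc) *\<^sub>v u x y = ?aD *\<^sub>v (Dc *\<^sub>v u x y)" by (rule assoc_mult_mat_vec[OF aD D uc])
    also have "(s \<cdot>\<^sub>m 1\<^sub>m nu) *\<^sub>v u x y = s \<cdot>\<^sub>v u x y"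
      using smult_mat_mv[OF one_carrier_mat uc, of s] uc by simp
    finally have 1: "?Dx *\<^sub>v u x y = ?aD *\<^sub>v (Dc *\<^sub>v u x y) - s \<cdot>\<^sub>v u x y" .
    have wc: "w1 x + w2 y \<in> carrier_vec nu" using w1c w2c by simp
    have Xwc: "Xc *\<^sub>v (w1 x + w2 y) \<in> carrier_vec nu" using X wc by simp
    have "?Dx *\<^sub>v u x y = - (?Dx *\<^sub>v (Xc *\<^sub>v (w1 x + w2 y)))"
      unfolding u_def by (rule mv_uminus[OF Dx Xwc])
    also have "?Dx *\<^sub>v (Xc *\<^sub>v (w1 x + w2 y)) = (?Dx * Xc) *\<^sub>v (w1 x + w2 y)"
      by (rule assoc_mult_mat_vec[symmetric, OF Dx X wc])
    also have "\<dots> = w1 x + w2 y" unfolding DX using wc by simp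
    finally have 2: "?Dx *\<^sub>v u x y = - (w1 x + w2 y)" .
    from 1 2 show ?thesis by simp
  qed
  note dims = carrier_matD[OF K] carrier_matD[OF Ki] carrier_matD[OF B] carrier_matD[OF C] carrier_matD[OF D]
    carrier_matD[OF X] carrier_matD[OF Y]
  have E1iff: "(Kc *\<^sub>v x + Bc *\<^sub>v (Xc *\<^sub>v (?aD *\<^sub>v (Cc *\<^sub>v x))) + Bc *\<^sub>v (Xc *\<^sub>v (?aB *\<^sub>v y)) = 0\<^sub>v n)
     \<longleftrightarrow> Kc *\<^sub>v x = Bc *\<^sub>v u x y" for x y
    unfolding Bu w1_def w2_def by (rule vsum3_0_iff1) (intro carrier_vecI, simp add: dims)+
  have F3: "?aC *\<^sub>v z x y = - (s \<cdot>\<^sub>v (?aC *\<^sub>v (Yc *\<^sub>v (Cc *\<^sub>v x)))) - ?aC *\<^sub>v (Dc *\<^sub>v (Xc *\<^sub>v w2 y))"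
    if x: "x \<in> carrier_vec n" for x y
  proof -
    have Cx: "Cc *\<^sub>v x \<in> carrier_vec ny" using C x by simp
    have YCx: "Yc *\<^sub>v (Cc *\<^sub>v x) \<in> carrier_vec ny" using Y Cx by simp
    have DXw2: "Dc *\<^sub>v (Xc *\<^sub>v w2 y) \<in> carrier_vec ny" using D X w2c by simp
    have sY: "s \<cdot>\<^sub>v (Yc *\<^sub>v (Cc *\<^sub>v x)) \<in> carrier_vec ny" using YCx by simp
    have Duc: "Dc *\<^sub>v u x y \<in> carrier_vec ny" using D uc by simp
    have Du2: "Dc *\<^sub>v u x y = - (Cc *\<^sub>v x + s \<cdot>\<^sub>v (Yc *\<^sub>v (Cc *\<^sub>v x)) + Dc *\<^sub>v (Xc *\<^sub>v w2 y))"
      unfolding Du F2[OF x] ..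
    have "?aC *\<^sub>v z x y = ?aC *\<^sub>v (Cc *\<^sub>v x) + ?aC *\<^sub>v (Dc *\<^sub>v u x y)"
      unfolding z_def by (rule mult_add_distrib_mat_vec[OF aC Cx Duc])
    also have "?aC *\<^sub>v (Dc *\<^sub>v u x y) = - (?aC *\<^sub>v (Cc *\<^sub>v x + s \<cdot>\<^sub>v (Yc *\<^sub>v (Cc *\<^sub>v x)) + Dc *\<^sub>v (Xc *\<^sub>v w2 y)))"
      unfolding Du2 by (rule mv_uminus[OF aC]) (use Cx sY DXw2 in simp)
    also have "?aC *\<^sub>v (Cc *\<^sub>v x + s \<cdot>\<^sub>v (Yc *\<^sub>v (Cc *\<^sub>v x)) + Dc *\<^sub>v (Xc *\<^sub>v w2 y))
       = ?aC *\<^sub>v (Cc *\<^sub>v x) + s \<cdot>\<^sub>v (?aC *\<^sub>v (Yc *\<^sub>v (Cc *\<^sub>v x))) + ?aC *\<^sub>v (Dc *\<^sub>v (Xc *\<^sub>v w2 y))"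
      using Cx sY DXw2 YCx
      by (simp add: mult_add_distrib_mat_vec[OF aC] mult_mat_vec[OF aC])
        (rule assoc_add_vec[symmetric], use mult_mat_vec_carrier[OF aC Cx] mult_mat_vec_carrier[OF aC YCx]
          mult_mat_vec_carrier[OF aC DXw2] in auto)
    finally have e: "?aC *\<^sub>v z x y = ?aC *\<^sub>v (Cc *\<^sub>v x) + - (?aC *\<^sub>v (Cc *\<^sub>v x) + s \<cdot>\<^sub>v (?aC *\<^sub>v (Yc *\<^sub>v (Cc *\<^sub>v x))) + ?aC *\<^sub>v (Dc *\<^sub>v (Xc *\<^sub>v w2 y)))" .
    have c1: "?aC *\<^sub>v (Cc *\<^sub>v x) \<in> carrier_vec n" "s \<cdot>\<^sub>v (?aC *\<^sub>v (Yc *\<^sub>v (Cc *\<^sub>v x))) \<in> carrier_vec n"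
      "?aC *\<^sub>v (Dc *\<^sub>v (Xc *\<^sub>v w2 y)) \<in> carrier_vec n" "?aC *\<^sub>v z x y \<in> carrier_vec n"
      using aC Cx YCx DXw2 zc by auto
    have c5: "- (s \<cdot>\<^sub>v (?aC *\<^sub>v (Yc *\<^sub>v (Cc *\<^sub>v x)))) - ?aC *\<^sub>v (Dc *\<^sub>v (Xc *\<^sub>v w2 y)) \<in> carrier_vec n"
      using c1 by simp
    show ?thesis unfolding vec_eq_idx[OF c1(4) c5]
      unfolding e using carrier_vecD[OF c1(1)] carrier_vecD[OF c1(2)] carrier_vecD[OF c1(3)] by auto
  qed
  have E2iff: "(s \<cdot>\<^sub>v (?aC *\<^sub>v (Yc *\<^sub>v (Cc *\<^sub>v x))) + ?aK *\<^sub>v y + ?aC *\<^sub>v (Dc *\<^sub>v (Xc *\<^sub>v (?aB *\<^sub>v y))) = 0\<^sub>v n)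
     \<longleftrightarrow> ?aK *\<^sub>v y = ?aC *\<^sub>v z x y" if x: "x \<in> carrier_vec n" for x y
    unfolding F3[OF x] w2_def by (rule vsum3_0_iff2) (intro carrier_vecI, simp add: dims)+
  have Gu: "?G *\<^sub>v v = Cc *\<^sub>v (Ki *\<^sub>v (Bc *\<^sub>v v)) + Dc *\<^sub>v v" if v: "v \<in> carrier_vec nu" for v
  proof -
    have CKB: "Cc * Ki * Bc \<in> carrier_mat ny nu" using C Ki B by simp
    have CK: "Cc * Ki \<in> carrier_mat ny n" using C Ki by simp
    have Bv: "Bc *\<^sub>v v \<in> carrier_vec n" using B v by simp
    have "?G *\<^sub>v v = (Cc * Ki * Bc) *\<^sub>v v + Dc *\<^sub>v v" by (rule add_mult_distrib_mat_vec[OF CKB D v])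
    also have "(Cc * Ki * Bc) *\<^sub>v v = Cc *\<^sub>v (Ki *\<^sub>v (Bc *\<^sub>v v))"
      unfolding assoc_mult_mat_vec[OF CK B v] assoc_mult_mat_vec[OF C Ki Bv] ..
    finally show ?thesis .
  qed
  have aGz: "mat_adjoint ?G *\<^sub>v v = ?aB *\<^sub>v (?aKi *\<^sub>v (?aC *\<^sub>v v)) + ?aD *\<^sub>v v" if v: "v \<in> carrier_vec ny" for v
  proof -
    have BKC: "?aB * ?aKi * ?aC \<in> carrier_mat nu ny" using aB aKi aC by simp
    have BK: "?aB * ?aKi \<in> carrier_mat nu n" using aB aKi by simp
    have Cv: "?aC *\<^sub>v v \<in> carrier_vec n" using aC v by simp
    have "mat_adjoint ?G *\<^sub>v v = (?aB * ?aKi * ?aC) *\<^sub>v v + ?aD *\<^sub>v v" unfolding aG by (rule add_mult_distrib_mat_vec[OF BKC aD v])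
    also have "(?aB * ?aKi * ?aC) *\<^sub>v v = ?aB *\<^sub>v (?aKi *\<^sub>v (?aC *\<^sub>v v))"
      unfolding assoc_mult_mat_vec[OF BK aC v] assoc_mult_mat_vec[OF aB aKi Cv] ..
    finally show ?thesis .
  qed
  have GG: "(mat_adjoint ?G * ?G) *\<^sub>v v = mat_adjoint ?G *\<^sub>v (?G *\<^sub>v v)" if v: "v \<in> carrier_vec nu" for v
    using adj_carrier[OF G] G v by (rule assoc_mult_mat_vec)
  have KiK_v: "Ki *\<^sub>v (Kc *\<^sub>v v) = v" if v: "v \<in> carrier_vec n" for v
    using assoc_mult_mat_vec[OF Ki K v] KiK v by simp
  have KKi_v: "Kc *\<^sub>v (Ki *\<^sub>v v) = v" if v: "v \<in> carrier_vec n" for v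
    using assoc_mult_mat_vec[OF K Ki v] KKi v by simp
  have aKiK_v: "?aKi *\<^sub>v (?aK *\<^sub>v v) = v" if v: "v \<in> carrier_vec n" for v
    using assoc_mult_mat_vec[OF aKi aK v] aKiK v by simp
  have aKKi_v: "?aK *\<^sub>v (?aKi *\<^sub>v v) = v" if v: "v \<in> carrier_vec n" for v
    using assoc_mult_mat_vec[OF aK aKi v] aKKi v by simp
  have aDz: "?aD *\<^sub>v z x y = w1 x + ?aD *\<^sub>v (Dc *\<^sub>v u x y)" if x: "x \<in> carrier_vec n" for x y
    unfolding z_def w1_def by (rule mult_add_distrib_mat_vec[OF aD]) (use C x D uc in simp_all)
  show ?thesis
  proof
    assume "\<exists>x y. x \<in> carrier_vec n \<and> y \<in> carrier_vec n \<and> (x \<noteq> 0\<^sub>v n \<or> y \<noteq> 0\<^sub>v n) \<and>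
          Kc *\<^sub>v x + Bc *\<^sub>v (Xc *\<^sub>v (?aD *\<^sub>v (Cc *\<^sub>v x))) + Bc *\<^sub>v (Xc *\<^sub>v (?aB *\<^sub>v y)) = 0\<^sub>v n \<and>
          s \<cdot>\<^sub>v (?aC *\<^sub>v (Yc *\<^sub>v (Cc *\<^sub>v x))) + ?aK *\<^sub>v y + ?aC *\<^sub>v (Dc *\<^sub>v (Xc *\<^sub>v (?aB *\<^sub>v y))) = 0\<^sub>v n"
    then obtain x y where x: "x \<in> carrier_vec n" and y: "y \<in> carrier_vec n" and nz: "x \<noteq> 0\<^sub>v n \<or> y \<noteq> 0\<^sub>v n"
      and E1: "Kc *\<^sub>v x + Bc *\<^sub>v (Xc *\<^sub>v (?aD *\<^sub>v (Cc *\<^sub>v x))) + Bc *\<^sub>v (Xc *\<^sub>v (?aB *\<^sub>v y)) = 0\<^sub>v n"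
      and E2: "s \<cdot>\<^sub>v (?aC *\<^sub>v (Yc *\<^sub>v (Cc *\<^sub>v x))) + ?aK *\<^sub>v y + ?aC *\<^sub>v (Dc *\<^sub>v (Xc *\<^sub>v (?aB *\<^sub>v y))) = 0\<^sub>v n"
      by blast
    have Kx: "Kc *\<^sub>v x = Bc *\<^sub>v u x y" using E1 E1iff by blast
    have Ky: "?aK *\<^sub>v y = ?aC *\<^sub>v z x y" using E2 E2iff[OF x] by blast
    have xe: "x = Ki *\<^sub>v (Bc *\<^sub>v u x y)" using KiK_v[OF x] Kx by simp
    have ye: "y = ?aKi *\<^sub>v (?aC *\<^sub>v z x y)" using aKiK_v[OF y] Ky by simp
    have Gue: "?G *\<^sub>v u x y = z x y" unfolding Gu[OF uc] xe[symmetric] z_def ..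
    have "mat_adjoint ?G *\<^sub>v z x y = w2 y + (w1 x + ?aD *\<^sub>v (Dc *\<^sub>v u x y))"
      unfolding aGz[OF zc] ye[symmetric] aDz[OF x] w2_def ..
    also have "\<dots> = s \<cdot>\<^sub>v u x y"
      by (rule vec_lin1[OF w1c w2c mult_mat_vec_carrier[OF aD mult_mat_vec_carrier[OF D uc]] _ F4]) (use uc in simp)
    finally have "(mat_adjoint ?G * ?G) *\<^sub>v u x y = s \<cdot>\<^sub>v u x y" unfolding GG[OF uc] Gue .
    moreover have "u x y \<noteq> 0\<^sub>v nu"
    proof
      assume u0: "u x y = 0\<^sub>v nu"
      have "x = 0\<^sub>v n" using xe unfolding u0 using B Ki by (simp add: mv_zero)
      moreover have "z x y = 0\<^sub>v ny" unfolding z_def u0 using \<open>x = 0\<^sub>v n\<close> C D by (simp add: mv_zero)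
      then have "y = 0\<^sub>v n" using ye mv_zero[OF aKi] mv_zero[OF aC] by simp
      ultimately show False using nz by simp
    qed
    ultimately show "\<exists>u. u \<in> carrier_vec nu \<and> u \<noteq> 0\<^sub>v nu \<and> (mat_adjoint ?G * ?G) *\<^sub>v u = s \<cdot>\<^sub>v u"
      using uc by blast
  next
    assume "\<exists>u. u \<in> carrier_vec nu \<and> u \<noteq> 0\<^sub>v nu \<and> (mat_adjoint ?G * ?G) *\<^sub>v u = s \<cdot>\<^sub>v u"
    then obtain u0 where u0c: "u0 \<in> carrier_vec nu" and u0nz: "u0 \<noteq> 0\<^sub>v nu"
      and ev: "(mat_adjoint ?G * ?G) *\<^sub>v u0 = s \<cdot>\<^sub>v u0" by blast
    define x where "x = Ki *\<^sub>v (Bc *\<^sub>v u0)"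
    define z0 where "z0 = ?G *\<^sub>v u0"
    define y where "y = ?aKi *\<^sub>v (?aC *\<^sub>v z0)"
    have x: "x \<in> carrier_vec n" unfolding x_def using Ki B u0c by simp
    have z0c: "z0 \<in> carrier_vec ny" unfolding z0_def using G u0c by simp
    have y: "y \<in> carrier_vec n" unfolding y_def using aKi aC z0c by simp
    have z0e: "z0 = Cc *\<^sub>v x + Dc *\<^sub>v u0" unfolding z0_def Gu[OF u0c] x_def ..
    have "mat_adjoint ?G *\<^sub>v z0 = s \<cdot>\<^sub>v u0" using ev unfolding GG[OF u0c] z0_def .
    moreover have "mat_adjoint ?G *\<^sub>v z0 = w2 y + (w1 x + ?aD *\<^sub>v (Dc *\<^sub>v u0))"
    proof -
      have "mat_adjoint ?G *\<^sub>v z0 = ?aB *\<^sub>v y + ?aD *\<^sub>v z0" unfolding aGz[OF z0c] y_def ..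
      also have "?aD *\<^sub>v z0 = w1 x + ?aD *\<^sub>v (Dc *\<^sub>v u0)" unfolding z0e w1_def
        by (rule mult_add_distrib_mat_vec[OF aD mult_mat_vec_carrier[OF C x] mult_mat_vec_carrier[OF D u0c]])
      finally show ?thesis unfolding w2_def .
    qed
    ultimately have "w2 y + (w1 x + ?aD *\<^sub>v (Dc *\<^sub>v u0)) = s \<cdot>\<^sub>v u0" by simp
    moreover have sc: "s \<cdot>\<^sub>v u0 \<in> carrier_vec nu" using u0c by simp
    ultimately have "?aD *\<^sub>v (Dc *\<^sub>v u0) - s \<cdot>\<^sub>v u0 = - (w1 x + w2 y)"
      using vec_lin2[OF w1c w2c mult_mat_vec_carrier[OF aD mult_mat_vec_carrier[OF D u0c]]] by blast
    moreover have "?Dx *\<^sub>v u0 = ?aD *\<^sub>v (Dc *\<^sub>v u0) - s \<cdot>\<^sub>v u0"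
    proof -
      have aDD: "?aD * Dc \<in> carrier_mat nu nu" by (rule mult_carrier_mat[OF aD D])
      have sI: "s \<cdot>\<^sub>m 1\<^sub>m nu \<in> carrier_mat nu nu" by simp
      have "?Dx *\<^sub>v u0 = (?aD * Dc) *\<^sub>v u0 - (s \<cdot>\<^sub>m 1\<^sub>m nu) *\<^sub>v u0"
        by (rule minus_mat_mv[OF aDD sI u0c])
      also have "(?aD * Dc) *\<^sub>v u0 = ?aD *\<^sub>v (Dc *\<^sub>v u0)" by (rule assoc_mult_mat_vec[OF aD D u0c])
      also have "(s \<cdot>\<^sub>m 1\<^sub>m nu) *\<^sub>v u0 = s \<cdot>\<^sub>v u0"
        using smult_mat_mv[OF one_carrier_mat u0c, of s] u0c by simp
      finally show ?thesis .
    qed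
    ultimately have Dxu: "?Dx *\<^sub>v u0 = - (w1 x + w2 y)" by simp
    have wc: "w1 x + w2 y \<in> carrier_vec nu" using w1c w2c by simp
    have "u0 = Xc *\<^sub>v (?Dx *\<^sub>v u0)"
      using assoc_mult_mat_vec[OF X Dx u0c] XD u0c by simp
    also have "\<dots> = - (Xc *\<^sub>v (w1 x + w2 y))" unfolding Dxu by (rule mv_uminus[OF X wc])
    finally have ue: "u0 = u x y" unfolding u_def .
    have "Kc *\<^sub>v x = Bc *\<^sub>v u0" unfolding x_def by (rule KKi_v) (use B u0c in simp)
    then have E1: "Kc *\<^sub>v x = Bc *\<^sub>v u x y" using ue by simp
    have ze: "z x y = z0" unfolding z_def z0e ue ..
    have "?aK *\<^sub>v y = ?aC *\<^sub>v z0" unfolding y_def by (rule aKKi_v) (use aC z0c in simp)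
    then have E2: "?aK *\<^sub>v y = ?aC *\<^sub>v z x y" using ze by simp
    have "x \<noteq> 0\<^sub>v n \<or> y \<noteq> 0\<^sub>v n"
    proof (rule ccontr)
      assume "\<not> (x \<noteq> 0\<^sub>v n \<or> y \<noteq> 0\<^sub>v n)"
      then have "x = 0\<^sub>v n" "y = 0\<^sub>v n" by auto
      then have "w1 x = 0\<^sub>v nu" "w2 y = 0\<^sub>v nu" unfolding w1_def w2_def using mv_zero[OF aD] mv_zero[OF C] mv_zero[OF aB] by auto
      then have "u x y = 0\<^sub>v nu" unfolding u_def using mv_zero[OF X] by simp
      then show False using ue u0nz by simp
    qed
    then show "\<exists>x y. x \<in> carrier_vec n \<and> y \<in> carrier_vec n \<and> (x \<noteq> 0\<^sub>v n \<or> y \<noteq> 0\<^sub>v n) \<and>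
          Kc *\<^sub>v x + Bc *\<^sub>v (Xc *\<^sub>v (?aD *\<^sub>v (Cc *\<^sub>v x))) + Bc *\<^sub>v (Xc *\<^sub>v (?aB *\<^sub>v y)) = 0\<^sub>v n \<and>
          s \<cdot>\<^sub>v (?aC *\<^sub>v (Yc *\<^sub>v (Cc *\<^sub>v x))) + ?aK *\<^sub>v y + ?aC *\<^sub>v (Dc *\<^sub>v (Xc *\<^sub>v (?aB *\<^sub>v y))) = 0\<^sub>v n"
      using x y E1 E2 E1iff E2iff[OF x] by blast
  qed
qed


lemma minv_props:
  assumes A: "(A :: 'a :: field mat) \<in> carrier_mat n n" and d: "det A \<noteq> 0"
  shows "A * minv A = 1\<^sub>m n" "minv A * A = 1\<^sub>m n" "minv A \<in> carrier_mat n n"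
proof -
  have U: "A \<in> Units (ring_mat TYPE('a) n n)" by (rule det_non_zero_imp_unit[OF A d])
  obtain B where B: "mat_inverse A = Some B"
  proof (cases "mat_inverse A")
    case None
    then have "A \<notin> Units (ring_mat TYPE('a) n n)" by (rule mat_inverse(1)[OF A])
    then show ?thesis using U by simp
  qed
  have "minv A = B" unfolding minv_def B by simp
  then show "A * minv A = 1\<^sub>m n" "minv A * A = 1\<^sub>m n" "minv A \<in> carrier_mat n n"
    using mat_inverse(2)[OF A B] by auto
qed

lemma Dxi_carrier: "Dxi nu D \<xi> \<in> carrier_mat nu nu" if "D \<in> carrier_mat ny nu"
  unfolding Dxi_def using that by (intro carrier_matI) auto

lemma Dtxi_carrier: "Dtxi ny D \<xi> \<in> carrier_mat ny ny" if "D \<in> carrier_mat ny nu"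
  unfolding Dtxi_def using that by (intro carrier_matI) auto

lemma det_Dtxi:
  assumes D: "D \<in> carrier_mat ny nu" and xi: "\<xi> \<noteq> 0" and d: "det (Dxi nu D \<xi>) \<noteq> 0"
  shows "det (Dtxi ny D \<xi>) \<noteq> 0"
proof
  assume "det (Dtxi ny D \<xi>) = 0"
  then obtain w where w: "w \<in> carrier_vec ny" "w \<noteq> 0\<^sub>v ny" and Dw: "Dtxi ny D \<xi> *\<^sub>v w = 0\<^sub>v ny"
    using det_0_iff_vec_prod_zero[OF Dtxi_carrier[OF D]] by blast
  have DT: "transpose_mat D \<in> carrier_mat nu ny" using D by simp
  have DDT: "D * transpose_mat D \<in> carrier_mat ny ny" using D by simp
  have e1: "D *\<^sub>v (transpose_mat D *\<^sub>v w) = \<xi>^2 \<cdot>\<^sub>v w"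
  proof -
    have "Dtxi ny D \<xi> *\<^sub>v w = (D * transpose_mat D) *\<^sub>v w - (\<xi>^2 \<cdot>\<^sub>m 1\<^sub>m ny) *\<^sub>v w"
      unfolding Dtxi_def by (rule minus_mat_mv[OF DDT _ w(1)]) simp
    also have "(\<xi>^2 \<cdot>\<^sub>m 1\<^sub>m ny) *\<^sub>v w = \<xi>^2 \<cdot>\<^sub>v w" using smult_mat_mv[OF one_carrier_mat w(1)] w(1) by simp
    also have "(D * transpose_mat D) *\<^sub>v w = D *\<^sub>v (transpose_mat D *\<^sub>v w)" using D DT w(1) by simp
    finally have "D *\<^sub>v (transpose_mat D *\<^sub>v w) - \<xi>^2 \<cdot>\<^sub>v w = 0\<^sub>v ny" using Dw by simp
    then show ?thesis using D w(1) by (intro eq_vecI) (auto dest!: arg_cong[of _ _ "\<lambda>v. v $ _"] simp: vec_eq_iff)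
  qed
  define v where "v = transpose_mat D *\<^sub>v w"
  have v: "v \<in> carrier_vec nu" unfolding v_def using DT w(1) by simp
  have "v \<noteq> 0\<^sub>v nu"
  proof
    assume "v = 0\<^sub>v nu"
    then have "\<xi>^2 \<cdot>\<^sub>v w = 0\<^sub>v ny" using e1 mv_zero[OF D] unfolding v_def by simp
    then have "w = 0\<^sub>v ny" using xi w(1) by (intro eq_vecI) (auto simp: vec_eq_iff)
    then show False using w(2) by simp
  qed
  moreover have "Dxi nu D \<xi> *\<^sub>v v = 0\<^sub>v nu"
  proof -
    have DTD: "transpose_mat D * D \<in> carrier_mat nu nu" using D by simp
    have "Dxi nu D \<xi> *\<^sub>v v = (transpose_mat D * D) *\<^sub>v v - (\<xi>^2 \<cdot>\<^sub>m 1\<^sub>m nu) *\<^sub>v v"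
      unfolding Dxi_def by (rule minus_mat_mv[OF DTD _ v]) simp
    also have "(\<xi>^2 \<cdot>\<^sub>m 1\<^sub>m nu) *\<^sub>v v = \<xi>^2 \<cdot>\<^sub>v v" using smult_mat_mv[OF one_carrier_mat v] v by simp
    also have "(transpose_mat D * D) *\<^sub>v v = transpose_mat D *\<^sub>v (\<xi>^2 \<cdot>\<^sub>v w)"
      using D DT v unfolding e1[folded v_def, symmetric] by simp
    also have "\<dots> = \<xi>^2 \<cdot>\<^sub>v v" unfolding v_def by (rule mult_mat_vec[OF DT w(1)])
    finally show ?thesis using v by (intro eq_vecI) auto
  qed
  ultimately have "det (Dxi nu D \<xi>) = 0"
    using det_0_iff_vec_prod_zero[OF Dxi_carrier[OF D]] v by blast
  then show False using d by simp
qed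

lemma DXD_real:
  assumes D: "D \<in> carrier_mat ny nu" and d1: "det (Dxi nu D \<xi>) \<noteq> 0" and d2: "det (Dtxi ny D \<xi>) \<noteq> 0"
  shows "D * minv (Dxi nu D \<xi>) * transpose_mat D = 1\<^sub>m ny + \<xi>^2 \<cdot>\<^sub>m minv (Dtxi ny D \<xi>)"
proof -
  let ?Dx = "Dxi nu D \<xi>" and ?Dt = "Dtxi ny D \<xi>"
  let ?X = "minv ?Dx" and ?Y = "minv ?Dt"
  have Dx: "?Dx \<in> carrier_mat nu nu" by (rule Dxi_carrier[OF D])
  have Dt: "?Dt \<in> carrier_mat ny ny" by (rule Dtxi_carrier[OF D])
  note X = minv_props[OF Dx d1] and Y = minv_props[OF Dt d2]
  have DT: "transpose_mat D \<in> carrier_mat nu ny" using D by simp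
  have I1: "\<xi>^2 \<cdot>\<^sub>m 1\<^sub>m ny \<in> carrier_mat ny ny" "\<xi>^2 \<cdot>\<^sub>m 1\<^sub>m nu \<in> carrier_mat nu nu" by auto
  have DDT: "D * transpose_mat D \<in> carrier_mat ny ny" using D by simp
  have DTD: "transpose_mat D * D \<in> carrier_mat nu nu" using D by simp
  have comm: "?Dt * D = D * ?Dx"
  proof -
    have "?Dt * D = D * transpose_mat D * D - (\<xi>^2 \<cdot>\<^sub>m 1\<^sub>m ny) * D"
      unfolding Dtxi_def by (rule minus_mult_distrib_mat[OF DDT I1(1) D])
    also have "(\<xi>^2 \<cdot>\<^sub>m 1\<^sub>m ny) * D = \<xi>^2 \<cdot>\<^sub>m D" using mult_smult_assoc_mat[OF one_carrier_mat D] D by simp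
    also have "D * transpose_mat D * D = D * (transpose_mat D * D)" using D DT by simp
    also have "\<xi>^2 \<cdot>\<^sub>m D = D * (\<xi>^2 \<cdot>\<^sub>m 1\<^sub>m nu)" using mult_smult_distrib[OF D one_carrier_mat] D by simp
    also have "D * (transpose_mat D * D) - D * (\<xi>^2 \<cdot>\<^sub>m 1\<^sub>m nu) = D * ?Dx"
      unfolding Dxi_def by (rule mult_minus_distrib_mat[OF D DTD I1(2), symmetric])
    finally show ?thesis .
  qed
  have DX: "D * ?X = ?Y * D"
  proof -
    have "?Y * D = ?Y * D * (?Dx * ?X)" using X(1) Y(3) D by simp
    also have "\<dots> = ?Y * (D * (?Dx * ?X))" by (rule assoc_mult_mat[OF Y(3) D mult_carrier_mat[OF Dx X(3)]])
    also have "D * (?Dx * ?X) = D * ?Dx * ?X" by (rule assoc_mult_mat[OF D Dx X(3), symmetric])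
    also have "?Y * (D * ?Dx * ?X) = ?Y * (D * ?Dx) * ?X" by (rule assoc_mult_mat[OF Y(3) mult_carrier_mat[OF D Dx] X(3), symmetric])
    also have "\<dots> = ?Y * (?Dt * D) * ?X" unfolding comm ..
    also have "\<dots> = (?Y * ?Dt) * D * ?X" by (simp only: assoc_mult_mat[OF Y(3) Dt D, symmetric])
    also have "\<dots> = D * ?X" using Y(2) D by simp
    finally show ?thesis by simp
  qed
  have "D * ?X * transpose_mat D = ?Y * D * transpose_mat D" unfolding DX ..
  also have "\<dots> = ?Y * (D * transpose_mat D)" using Y(3) D DT by simp
  also have "D * transpose_mat D = ?Dt + \<xi>^2 \<cdot>\<^sub>m 1\<^sub>m ny"
    unfolding Dtxi_def using DDT by (intro eq_matI) auto
  also have "?Y * (?Dt + \<xi>^2 \<cdot>\<^sub>m 1\<^sub>m ny) = ?Y * ?Dt + ?Y * (\<xi>^2 \<cdot>\<^sub>m 1\<^sub>m ny)"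
    by (rule mult_add_distrib_mat[OF Y(3) Dt I1(1)])
  also have "\<dots> = 1\<^sub>m ny + \<xi>^2 \<cdot>\<^sub>m ?Y" using Y(2) mult_smult_distrib[OF Y(3) one_carrier_mat] Y(3) by simp
  finally show ?thesis .
qed


lemma cmat_index[simp]: "i < dim_row M \<Longrightarrow> j < dim_col M \<Longrightarrow> cmat M $$ (i,j) = complex_of_real (M $$ (i,j))"
  unfolding cmat_def by simp

lemma cmat_mult: "A \<in> carrier_mat a b \<Longrightarrow> B \<in> carrier_mat b c \<Longrightarrow> cmat (A * B) = cmat A * cmat B"
  unfolding cmat_def by (rule of_real_hom.mat_hom_mult)

lemma cmat_add: "A \<in> carrier_mat a b \<Longrightarrow> B \<in> carrier_mat a b \<Longrightarrow> cmat (A + B) = cmat A + cmat B"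
  unfolding cmat_def by (intro eq_matI) auto

lemma cmat_minus: "A \<in> carrier_mat a b \<Longrightarrow> B \<in> carrier_mat a b \<Longrightarrow> cmat (A - B) = cmat A - cmat B"
  unfolding cmat_def by (intro eq_matI) auto

lemma cmat_smult: "cmat (r \<cdot>\<^sub>m A) = complex_of_real r \<cdot>\<^sub>m cmat A"
  unfolding cmat_def by (intro eq_matI) auto

lemma cmat_one: "cmat (1\<^sub>m n) = 1\<^sub>m n"
  unfolding cmat_def by (intro eq_matI) auto

lemma cmat_zero: "cmat (0\<^sub>m a b) = 0\<^sub>m a b"
  unfolding cmat_def by (intro eq_matI) auto

lemma dim_msum[simp]: "dim_row (msum d f S) = d" "dim_col (msum d f S) = d"
  unfolding msum_def by auto

lemma msum_index: "i < d \<Longrightarrow> j < d \<Longrightarrow> msum d f S $$ (i,j) = (\<Sum>l\<in>S. f l $$ (i,j))"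
  unfolding msum_def by simp

lemma mv_idx: "A \<in> carrier_mat nr nc \<Longrightarrow> v \<in> carrier_vec nc \<Longrightarrow> i < nr \<Longrightarrow> (A *\<^sub>v v) $ i = (\<Sum>j<nc. A $$ (i,j) * v $ j)"
  by (auto simp: scalar_prod_def lessThan_atLeast0 intro!: sum.cong)

lemma KN_idx:
  assumes A: "\<forall>i\<in>{0..m}. A i \<in> carrier_mat n n" and x: "x \<in> carrier_vec n" and i: "i < n"
  shows "(KN n m A \<tau> \<theta> N \<omega> *\<^sub>v x) $ i = (\<i> * complex_of_real \<omega>) * x $ i - (cmat (A 0) *\<^sub>v x) $ i
     - (\<Sum>l\<in>{1..m}. poly (pN \<theta> N (\<i> * complex_of_real \<omega>)) (complex_of_real (- \<tau> l)) * (cmat (A l) *\<^sub>v x) $ i)"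
proof -
  let ?a = "\<lambda>l. poly (pN \<theta> N (\<i> * complex_of_real \<omega>)) (complex_of_real (- \<tau> l))"
  let ?lam = "\<i> * complex_of_real \<omega>"
  have Al: "\<And>l. l \<in> {0..m} \<Longrightarrow> A l \<in> carrier_mat n n" using A by auto
  have K: "KN n m A \<tau> \<theta> N \<omega> \<in> carrier_mat n n" unfolding KN_def msum_def using Al[of 0] by auto
  have ent: "KN n m A \<tau> \<theta> N \<omega> $$ (i,j) = ?lam * (if i = j then 1 else 0) - complex_of_real (A 0 $$ (i,j))
       - (\<Sum>l\<in>{1..m}. ?a l * complex_of_real (A l $$ (i,j)))" if j: "j < n" for j
  proof -
    have "\<forall>l\<in>{1..m}. A l \<in> carrier_mat n n" using Al by auto
    then show ?thesis unfolding KN_def using i j carrier_matD[OF Al[of 0]] by (auto simp: msum_index intro!: sum.cong)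
  qed
  have "(KN n m A \<tau> \<theta> N \<omega> *\<^sub>v x) $ i = (\<Sum>j<n. (?lam * (if i = j then 1 else 0) - complex_of_real (A 0 $$ (i,j))
       - (\<Sum>l\<in>{1..m}. ?a l * complex_of_real (A l $$ (i,j)))) * x $ j)"
    unfolding mv_idx[OF K x i] by (rule sum.cong) (auto simp: ent)
  also have "\<dots> = (\<Sum>j<n. (if i = j then ?lam * x $ j else 0)) - (\<Sum>j<n. complex_of_real (A 0 $$ (i,j)) * x $ j)
       - (\<Sum>l\<in>{1..m}. ?a l * (\<Sum>j<n. complex_of_real (A l $$ (i,j)) * x $ j))"
  proof -
    have s1: "(\<Sum>j<n. (?lam * (if i = j then 1 else 0) - complex_of_real (A 0 $$ (i,j))
       - (\<Sum>l\<in>{1..m}. ?a l * complex_of_real (A l $$ (i,j)))) * x $ j)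
      = (\<Sum>j<n. ?lam * (if i = j then 1 else 0) * x $ j) - (\<Sum>j<n. complex_of_real (A 0 $$ (i,j)) * x $ j)
       - (\<Sum>j<n. (\<Sum>l\<in>{1..m}. ?a l * complex_of_real (A l $$ (i,j))) * x $ j)"
      by (simp only: left_diff_distrib sum_subtractf)
    have s0: "(\<Sum>j<n. ?lam * (if i = j then 1 else 0) * x $ j) = (\<Sum>j<n. (if i = j then ?lam * x $ j else 0))"
      by (rule sum.cong) auto
    have s2: "(\<Sum>j<n. (\<Sum>l\<in>{1..m}. ?a l * complex_of_real (A l $$ (i,j))) * x $ j)
       = (\<Sum>l\<in>{1..m}. ?a l * (\<Sum>j<n. complex_of_real (A l $$ (i,j)) * x $ j))"
      by (simp add: sum_distrib_right sum_distrib_left mult.assoc sum.swap[of _ "{..<n}"])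
    show ?thesis unfolding s1 s2 s0 ..
  qed
  also have "\<dots> = ?lam * x $ i - (cmat (A 0) *\<^sub>v x) $ i - (\<Sum>l\<in>{1..m}. ?a l * (cmat (A l) *\<^sub>v x) $ i)"
  proof -
    have c: "\<And>l. l \<in> {0..m} \<Longrightarrow> (cmat (A l) *\<^sub>v x) $ i = (\<Sum>j<n. complex_of_real (A l $$ (i,j)) * x $ j)"
    proof -
      fix l assume l: "l \<in> {0..m}"
      have Al': "A l \<in> carrier_mat n n" using Al l by blast
      note dd = carrier_matD[OF Al']
      show "(cmat (A l) *\<^sub>v x) $ i = (\<Sum>j<n. complex_of_real (A l $$ (i,j)) * x $ j)"
        using Al' x i dd by (subst mv_idx[of _ n n]) (auto intro!: sum.cong)
    qed
    show ?thesis using i by (simp add: c sum.delta)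
  qed
  finally show ?thesis .
qed


lemma mv3: "A \<in> carrier_mat a b \<Longrightarrow> B \<in> carrier_mat b c \<Longrightarrow> C \<in> carrier_mat c d \<Longrightarrow> x \<in> carrier_vec d
  \<Longrightarrow> (A * B * C) *\<^sub>v x = A *\<^sub>v (B *\<^sub>v (C *\<^sub>v x))"
proof -
  assume A: "A \<in> carrier_mat a b" and B: "B \<in> carrier_mat b c" and C: "C \<in> carrier_mat c d" and x: "x \<in> carrier_vec d"
  have AB: "A * B \<in> carrier_mat a c" using A B by simp
  have Cx: "C *\<^sub>v x \<in> carrier_vec c" using C x by simp
  show ?thesis unfolding assoc_mult_mat_vec[OF AB C x] assoc_mult_mat_vec[OF A B Cx] ..
qed

lemma mv4: "A \<in> carrier_mat a b \<Longrightarrow> B \<in> carrier_mat b c \<Longrightarrow> C \<in> carrier_mat c d \<Longrightarrow> D \<in> carrier_mat d e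
  \<Longrightarrow> x \<in> carrier_vec e \<Longrightarrow> (A * B * C * D) *\<^sub>v x = A *\<^sub>v (B *\<^sub>v (C *\<^sub>v (D *\<^sub>v x)))"
proof -
  assume A: "A \<in> carrier_mat a b" and B: "B \<in> carrier_mat b c" and C: "C \<in> carrier_mat c d"
    and D: "D \<in> carrier_mat d e" and x: "x \<in> carrier_vec e"
  have ABC: "A * B * C \<in> carrier_mat a d" using A B C by simp
  have Dx: "D *\<^sub>v x \<in> carrier_vec d" using D x by simp
  show ?thesis unfolding assoc_mult_mat_vec[OF ABC D x] mv3[OF A B C Dx] ..
qed

lemma KNadj_idx:
  assumes A: "\<forall>i\<in>{0..m}. A i \<in> carrier_mat n n" and y: "y \<in> carrier_vec n" and i: "i < n"
  shows "(mat_adjoint (KN n m A \<tau> \<theta> N \<omega>) *\<^sub>v y) $ i = cnj (\<i> * complex_of_real \<omega>) * y $ i - (cmat (transpose_mat (A 0)) *\<^sub>v y) $ i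
     - (\<Sum>l\<in>{1..m}. cnj (poly (pN \<theta> N (\<i> * complex_of_real \<omega>)) (complex_of_real (- \<tau> l))) * (cmat (transpose_mat (A l)) *\<^sub>v y) $ i)"
proof -
  let ?a = "\<lambda>l. cnj (poly (pN \<theta> N (\<i> * complex_of_real \<omega>)) (complex_of_real (- \<tau> l)))"
  let ?lam = "cnj (\<i> * complex_of_real \<omega>)"
  have Al: "\<And>l. l \<in> {0..m} \<Longrightarrow> A l \<in> carrier_mat n n" using A by auto
  have K: "KN n m A \<tau> \<theta> N \<omega> \<in> carrier_mat n n" unfolding KN_def msum_def using Al[of 0] by auto
  have aK: "mat_adjoint (KN n m A \<tau> \<theta> N \<omega>) \<in> carrier_mat n n" using K by simp
  have ent: "mat_adjoint (KN n m A \<tau> \<theta> N \<omega>) $$ (i,j) = ?lam * (if i = j then 1 else 0) - complex_of_real (A 0 $$ (j,i))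
       - (\<Sum>l\<in>{1..m}. ?a l * complex_of_real (A l $$ (j,i)))" if j: "j < n" for j
  proof -
    have "\<forall>l\<in>{1..m}. A l \<in> carrier_mat n n" using Al by auto
    then have "KN n m A \<tau> \<theta> N \<omega> $$ (j,i) = \<i> * complex_of_real \<omega> * (if j = i then 1 else 0) - complex_of_real (A 0 $$ (j,i))
       - (\<Sum>l\<in>{1..m}. poly (pN \<theta> N (\<i> * complex_of_real \<omega>)) (complex_of_real (- \<tau> l)) * complex_of_real (A l $$ (j,i)))"
      unfolding KN_def using i j carrier_matD[OF Al[of 0]] by (auto simp: msum_index intro!: sum.cong)
    then show ?thesis using K i j by (auto simp: carrier_matD)
  qed
  have "(mat_adjoint (KN n m A \<tau> \<theta> N \<omega>) *\<^sub>v y) $ i = (\<Sum>j<n. (?lam * (if i = j then 1 else 0) - complex_of_real (A 0 $$ (j,i))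
       - (\<Sum>l\<in>{1..m}. ?a l * complex_of_real (A l $$ (j,i)))) * y $ j)"
    unfolding mv_idx[OF aK y i] by (rule sum.cong) (auto simp: ent)
  also have "\<dots> = (\<Sum>j<n. (if i = j then ?lam * y $ j else 0)) - (\<Sum>j<n. complex_of_real (A 0 $$ (j,i)) * y $ j)
       - (\<Sum>l\<in>{1..m}. ?a l * (\<Sum>j<n. complex_of_real (A l $$ (j,i)) * y $ j))"
  proof -
    have s1: "(\<Sum>j<n. (?lam * (if i = j then 1 else 0) - complex_of_real (A 0 $$ (j,i))
       - (\<Sum>l\<in>{1..m}. ?a l * complex_of_real (A l $$ (j,i)))) * y $ j)
      = (\<Sum>j<n. ?lam * (if i = j then 1 else 0) * y $ j) - (\<Sum>j<n. complex_of_real (A 0 $$ (j,i)) * y $ j)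
       - (\<Sum>j<n. (\<Sum>l\<in>{1..m}. ?a l * complex_of_real (A l $$ (j,i))) * y $ j)"
      by (simp only: left_diff_distrib sum_subtractf)
    have s0: "(\<Sum>j<n. ?lam * (if i = j then 1 else 0) * y $ j) = (\<Sum>j<n. (if i = j then ?lam * y $ j else 0))"
      by (rule sum.cong) auto
    have s2: "(\<Sum>j<n. (\<Sum>l\<in>{1..m}. ?a l * complex_of_real (A l $$ (j,i))) * y $ j)
       = (\<Sum>l\<in>{1..m}. ?a l * (\<Sum>j<n. complex_of_real (A l $$ (j,i)) * y $ j))"
      by (simp add: sum_distrib_right sum_distrib_left mult.assoc sum.swap[of _ "{..<n}"])
    show ?thesis unfolding s1 s2 s0 ..
  qed
  also have "\<dots> = ?lam * y $ i - (cmat (transpose_mat (A 0)) *\<^sub>v y) $ i - (\<Sum>l\<in>{1..m}. ?a l * (cmat (transpose_mat (A l)) *\<^sub>v y) $ i)"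
  proof -
    have c: "\<And>l. l \<in> {0..m} \<Longrightarrow> (cmat (transpose_mat (A l)) *\<^sub>v y) $ i = (\<Sum>j<n. complex_of_real (A l $$ (j,i)) * y $ j)"
    proof -
      fix l assume l: "l \<in> {0..m}"
      have Al': "A l \<in> carrier_mat n n" using Al l by blast
      note dd = carrier_matD[OF Al']
      have T: "cmat (transpose_mat (A l)) \<in> carrier_mat n n" using Al' by simp
      show "(cmat (transpose_mat (A l)) *\<^sub>v y) $ i = (\<Sum>j<n. complex_of_real (A l $$ (j,i)) * y $ j)"
        using y i dd by (subst mv_idx[OF T y i]) (auto intro!: sum.cong)
    qed
    show ?thesis using i by (simp add: c sum.delta)
  qed
  finally show ?thesis .
qed


lemma zero_mv_idx: "v \<in> carrier_vec nc \<Longrightarrow> i < nr \<Longrightarrow> (0\<^sub>m nr nc *\<^sub>v v) $ i = (0 :: 'a :: comm_ring_1)"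
  by (simp add: scalar_prod_def)

lemma four_block_mv_idx:
  fixes A B C D :: "'a :: comm_ring_1 mat"
  assumes "A \<in> carrier_mat n n" "B \<in> carrier_mat n n" "C \<in> carrier_mat n n" "D \<in> carrier_mat n n"
    and x: "x \<in> carrier_vec n" and y: "y \<in> carrier_vec n" and i: "i < n"
  shows "(four_block_mat A B C D *\<^sub>v (x @\<^sub>v y)) $ i = (A *\<^sub>v x) $ i + (B *\<^sub>v y) $ i"
    "(four_block_mat A B C D *\<^sub>v (x @\<^sub>v y)) $ (n + i) = (C *\<^sub>v x) $ i + (D *\<^sub>v y) $ i"
proof -
  have e: "four_block_mat A B C D *\<^sub>v (x @\<^sub>v y) = (A *\<^sub>v x + B *\<^sub>v y) @\<^sub>v (C *\<^sub>v x + D *\<^sub>v y)"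
    by (rule four_block_mat_mult_vec[OF assms(1-4) x y])
  have d1: "dim_vec (A *\<^sub>v x + B *\<^sub>v y) = n" "dim_vec (C *\<^sub>v x + D *\<^sub>v y) = n"
    using assms by auto
  show "(four_block_mat A B C D *\<^sub>v (x @\<^sub>v y)) $ i = (A *\<^sub>v x) $ i + (B *\<^sub>v y) $ i"
    unfolding e using d1 i assms by simp
  show "(four_block_mat A B C D *\<^sub>v (x @\<^sub>v y)) $ (n + i) = (C *\<^sub>v x) $ i + (D *\<^sub>v y) $ i"
    unfolding e using d1 i assms by simp
qed

lemma cmat_four_block:
  assumes "A \<in> carrier_mat n n" "B \<in> carrier_mat n n" "C \<in> carrier_mat n n" "D \<in> carrier_mat n n"
  shows "cmat (four_block_mat A B C D) = four_block_mat (cmat A) (cmat B) (cmat C) (cmat D)"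
  unfolding cmat_def by (rule map_four_block_mat[OF assms])

lemma Hop_idx:
  assumes v: "v \<in> carrier_vec (2*n)" and k: "k < 2*n"
    and A: "\<forall>i\<in>{0..m}. A i \<in> carrier_mat n n"
    and B: "B \<in> carrier_mat n nu" and C: "C \<in> carrier_mat ny n"
  shows "Hop n m nu ny A B C D \<tau> \<xi> p v $ k = (cmat (M0 nu ny (A 0) B C D \<xi>) *\<^sub>v v) $ k
     + (\<Sum>l\<in>{1..m}. poly p (complex_of_real (- \<tau> l)) * (cmat (Mplus n (A l)) *\<^sub>v v) $ k
        + cnj (poly p (complex_of_real (- \<tau> l))) * (cmat (Mminus n (A l)) *\<^sub>v v) $ k)"
proof -
  have M0: "cmat (M0 nu ny (A 0) B C D \<xi>) \<in> carrier_mat (2*n) (2*n)"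
    using M0_carrier[of "A 0" n B nu C ny] A B C by auto
  have "Hop n m nu ny A B C D \<tau> \<xi> p v $ k = (cmat (M0 nu ny (A 0) B C D \<xi>) *\<^sub>v v) $ k
     + vsum (2*n) (\<lambda>l. poly p (complex_of_real (- \<tau> l)) \<cdot>\<^sub>v (cmat (Mplus n (A l)) *\<^sub>v v)
        + cnj (poly p (complex_of_real (- \<tau> l))) \<cdot>\<^sub>v (cmat (Mminus n (A l)) *\<^sub>v v)) {1..m} $ k"
    unfolding Hop_def using k by (intro index_add_vec(1)) simp
  also have "vsum (2*n) (\<lambda>l. poly p (complex_of_real (- \<tau> l)) \<cdot>\<^sub>v (cmat (Mplus n (A l)) *\<^sub>v v)
        + cnj (poly p (complex_of_real (- \<tau> l))) \<cdot>\<^sub>v (cmat (Mminus n (A l)) *\<^sub>v v)) {1..m} $ k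
     = (\<Sum>l\<in>{1..m}. poly p (complex_of_real (- \<tau> l)) * (cmat (Mplus n (A l)) *\<^sub>v v) $ k
        + cnj (poly p (complex_of_real (- \<tau> l))) * (cmat (Mminus n (A l)) *\<^sub>v v) $ k)"
    unfolding index_vsum[OF k]
  proof (rule sum.cong[OF refl])
    fix l assume l: "l \<in> {1..m}"
    have Al: "A l \<in> carrier_mat n n" using A l by auto
    have d1: "dim_row (cmat (Mplus n (A l))) = 2*n" "dim_row (cmat (Mminus n (A l))) = 2*n"
      using Mplus_carrier[OF Al] Mminus_carrier[OF Al] by auto
    show "(poly p (complex_of_real (- \<tau> l)) \<cdot>\<^sub>v (cmat (Mplus n (A l)) *\<^sub>v v)
        + cnj (poly p (complex_of_real (- \<tau> l))) \<cdot>\<^sub>v (cmat (Mminus n (A l)) *\<^sub>v v)) $ k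
      = poly p (complex_of_real (- \<tau> l)) * (cmat (Mplus n (A l)) *\<^sub>v v) $ k
        + cnj (poly p (complex_of_real (- \<tau> l))) * (cmat (Mminus n (A l)) *\<^sub>v v) $ k"
      using k d1 by (simp del: index_mult_mat_vec)
  qed
  finally show ?thesis .
qed

lemma Hop_blocks:
  assumes A: "\<forall>i\<in>{0..m}. A i \<in> carrier_mat n n"
    and B: "B \<in> carrier_mat n nu" and C: "C \<in> carrier_mat ny n" and D: "D \<in> carrier_mat ny nu"
    and X: "minv (Dxi nu D \<xi>) \<in> carrier_mat nu nu" and Y: "minv (Dtxi ny D \<xi>) \<in> carrier_mat ny ny"
    and x: "x \<in> carrier_vec n" and y: "y \<in> carrier_vec n" and i: "i < n"
  shows "Hop n m nu ny A B C D \<tau> \<xi> p (x @\<^sub>v y) $ i = (cmat (A 0) *\<^sub>v x) $ i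
      - (cmat B *\<^sub>v (cmat (minv (Dxi nu D \<xi>)) *\<^sub>v (mat_adjoint (cmat D) *\<^sub>v (cmat C *\<^sub>v x)))) $ i
      - (cmat B *\<^sub>v (cmat (minv (Dxi nu D \<xi>)) *\<^sub>v (mat_adjoint (cmat B) *\<^sub>v y))) $ i
      + (\<Sum>l\<in>{1..m}. poly p (complex_of_real (- \<tau> l)) * (cmat (A l) *\<^sub>v x) $ i)"
   "Hop n m nu ny A B C D \<tau> \<xi> p (x @\<^sub>v y) $ (n + i) =
      complex_of_real (\<xi>^2) * (mat_adjoint (cmat C) *\<^sub>v (cmat (minv (Dtxi ny D \<xi>)) *\<^sub>v (cmat C *\<^sub>v x))) $ i
      - (cmat (transpose_mat (A 0)) *\<^sub>v y) $ i
      + (mat_adjoint (cmat C) *\<^sub>v (cmat D *\<^sub>v (cmat (minv (Dxi nu D \<xi>)) *\<^sub>v (mat_adjoint (cmat B) *\<^sub>v y)))) $ i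
      - (\<Sum>l\<in>{1..m}. cnj (poly p (complex_of_real (- \<tau> l))) * (cmat (transpose_mat (A l)) *\<^sub>v y) $ i)"
proof -
  let ?Xi = "minv (Dxi nu D \<xi>)" and ?Yi = "minv (Dtxi ny D \<xi>)"
  have A0: "A 0 \<in> carrier_mat n n" using A by auto
  note dA0 = carrier_matD[OF A0] and dB = carrier_matD[OF B] and dC = carrier_matD[OF C] and dD = carrier_matD[OF D]
    and dX = carrier_matD[OF X] and dY = carrier_matD[OF Y]
  have v: "x @\<^sub>v y \<in> carrier_vec (2*n)" using x y by (simp add: mult_2)
  have DT: "transpose_mat D \<in> carrier_mat nu ny" and BT: "transpose_mat B \<in> carrier_mat nu n"
    and CT: "transpose_mat C \<in> carrier_mat n ny" and A0T: "transpose_mat (A 0) \<in> carrier_mat n n"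
    using B C D A0 by auto
  have P1: "B * ?Xi * transpose_mat D * C \<in> carrier_mat n n" by (intro carrier_matI) (simp_all add: dB dC dD dX dY)
  have P2: "B * ?Xi * transpose_mat B \<in> carrier_mat n n" by (intro carrier_matI) (simp_all add: dB dC dD dX dY)
  have P3: "transpose_mat C * ?Yi * C \<in> carrier_mat n n" by (intro carrier_matI) (simp_all add: dB dC dD dX dY)
  have P4: "transpose_mat C * D * ?Xi * transpose_mat B \<in> carrier_mat n n" by (intro carrier_matI) (simp_all add: dB dC dD dX dY)
  have M11: "A 0 - B * ?Xi * transpose_mat D * C \<in> carrier_mat n n" by (intro carrier_matI) (simp_all add: carrier_matD[OF P1] dB dC dD dX dY dA0)
  have M12: "(-1) \<cdot>\<^sub>m (B * ?Xi * transpose_mat B) \<in> carrier_mat n n" by (intro carrier_matI) (simp_all add: carrier_matD[OF P2] dB dC dD dX dY dA0)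
  have M21: "(\<xi>^2) \<cdot>\<^sub>m (transpose_mat C * ?Yi * C) \<in> carrier_mat n n" by (intro carrier_matI) (simp_all add: carrier_matD[OF P3] dB dC dD dX dY dA0)
  have M22: "(-1) \<cdot>\<^sub>m transpose_mat (A 0) + transpose_mat C * D * ?Xi * transpose_mat B \<in> carrier_mat n n"
    by (intro carrier_matI) (simp_all add: carrier_matD[OF P4] dB dC dD dX dY dA0)
  have cM0: "cmat (M0 nu ny (A 0) B C D \<xi>) = four_block_mat
     (cmat (A 0 - B * ?Xi * transpose_mat D * C)) (cmat ((-1) \<cdot>\<^sub>m (B * ?Xi * transpose_mat B)))
     (cmat ((\<xi>^2) \<cdot>\<^sub>m (transpose_mat C * ?Yi * C)))
     (cmat ((-1) \<cdot>\<^sub>m transpose_mat (A 0) + transpose_mat C * D * ?Xi * transpose_mat B))"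
    unfolding M0_def by (rule cmat_four_block[OF M11 M12 M21 M22])
  note fb = four_block_mv_idx[OF cmat_carrier[THEN iffD2, OF M11] cmat_carrier[THEN iffD2, OF M12]
      cmat_carrier[THEN iffD2, OF M21] cmat_carrier[THEN iffD2, OF M22] x y i]
  have cP1: "cmat (B * ?Xi * transpose_mat D * C) *\<^sub>v x = cmat B *\<^sub>v (cmat ?Xi *\<^sub>v (mat_adjoint (cmat D) *\<^sub>v (cmat C *\<^sub>v x)))"
  proof -
    have "cmat (B * ?Xi * transpose_mat D * C) = cmat B * cmat ?Xi * cmat (transpose_mat D) * cmat C"
      unfolding cmat_mult[OF mult_carrier_mat[OF mult_carrier_mat[OF B X] DT] C]
        cmat_mult[OF mult_carrier_mat[OF B X] DT] cmat_mult[OF B X] ..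
    then show ?thesis using mv4[of "cmat B" n nu "cmat ?Xi" nu "cmat (transpose_mat D)" ny "cmat C" n x] B X DT C x
      by (simp add: adj_cmat)
  qed
  have cP2: "cmat (B * ?Xi * transpose_mat B) *\<^sub>v y = cmat B *\<^sub>v (cmat ?Xi *\<^sub>v (mat_adjoint (cmat B) *\<^sub>v y))"
  proof -
    have "cmat (B * ?Xi * transpose_mat B) = cmat B * cmat ?Xi * cmat (transpose_mat B)"
      unfolding cmat_mult[OF mult_carrier_mat[OF B X] BT] cmat_mult[OF B X] ..
    then show ?thesis using mv3[of "cmat B" n nu "cmat ?Xi" nu "cmat (transpose_mat B)" n y] B X BT y
      by (simp add: adj_cmat)
  qed
  have cP3: "cmat (transpose_mat C * ?Yi * C) *\<^sub>v x = mat_adjoint (cmat C) *\<^sub>v (cmat ?Yi *\<^sub>v (cmat C *\<^sub>v x))"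
  proof -
    have "cmat (transpose_mat C * ?Yi * C) = cmat (transpose_mat C) * cmat ?Yi * cmat C"
      unfolding cmat_mult[OF mult_carrier_mat[OF CT Y] C] cmat_mult[OF CT Y] ..
    then show ?thesis using mv3[of "cmat (transpose_mat C)" n ny "cmat ?Yi" ny "cmat C" n x] CT Y C x
      by (simp add: adj_cmat)
  qed
  have cP4: "cmat (transpose_mat C * D * ?Xi * transpose_mat B) *\<^sub>v y
      = mat_adjoint (cmat C) *\<^sub>v (cmat D *\<^sub>v (cmat ?Xi *\<^sub>v (mat_adjoint (cmat B) *\<^sub>v y)))"
  proof -
    have "cmat (transpose_mat C * D * ?Xi * transpose_mat B) = cmat (transpose_mat C) * cmat D * cmat ?Xi * cmat (transpose_mat B)"
      unfolding cmat_mult[OF mult_carrier_mat[OF mult_carrier_mat[OF CT D] X] BT]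
        cmat_mult[OF mult_carrier_mat[OF CT D] X] cmat_mult[OF CT D] ..
    then show ?thesis using mv4[of "cmat (transpose_mat C)" n ny "cmat D" nu "cmat ?Xi" nu "cmat (transpose_mat B)" n y] CT D X BT y
      by (simp add: adj_cmat)
  qed
  have e11: "(cmat (A 0 - B * ?Xi * transpose_mat D * C) *\<^sub>v x) $ i
      = (cmat (A 0) *\<^sub>v x) $ i - (cmat (B * ?Xi * transpose_mat D * C) *\<^sub>v x) $ i"
    unfolding cmat_minus[OF A0 P1] using minus_mat_mv[of "cmat (A 0)" n n "cmat (B * ?Xi * transpose_mat D * C)" x] A0 P1 x i dA0 carrier_matD[OF P1]
    by simp
  have e12: "(cmat ((-1) \<cdot>\<^sub>m (B * ?Xi * transpose_mat B)) *\<^sub>v y) $ i = - (cmat (B * ?Xi * transpose_mat B) *\<^sub>v y) $ i"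
    unfolding cmat_smult using smult_mat_mv[of "cmat (B * ?Xi * transpose_mat B)" n n y] P2 y i carrier_matD[OF P2] by simp
  have e21: "(cmat ((\<xi>^2) \<cdot>\<^sub>m (transpose_mat C * ?Yi * C)) *\<^sub>v x) $ i = complex_of_real (\<xi>^2) * (cmat (transpose_mat C * ?Yi * C) *\<^sub>v x) $ i"
    unfolding cmat_smult using smult_mat_mv[of "cmat (transpose_mat C * ?Yi * C)" n n x] P3 x i carrier_matD[OF P3] by simp
  have e22: "(cmat ((-1) \<cdot>\<^sub>m transpose_mat (A 0) + transpose_mat C * D * ?Xi * transpose_mat B) *\<^sub>v y) $ i
      = - (cmat (transpose_mat (A 0)) *\<^sub>v y) $ i + (cmat (transpose_mat C * D * ?Xi * transpose_mat B) *\<^sub>v y) $ i"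
  proof -
    have s1: "(-1) \<cdot>\<^sub>m transpose_mat (A 0) \<in> carrier_mat n n" using A0T by simp
    have "cmat ((-1) \<cdot>\<^sub>m transpose_mat (A 0) + transpose_mat C * D * ?Xi * transpose_mat B)
       = complex_of_real (-1) \<cdot>\<^sub>m cmat (transpose_mat (A 0)) + cmat (transpose_mat C * D * ?Xi * transpose_mat B)"
      unfolding cmat_add[OF s1 P4] cmat_smult ..
    then show ?thesis
      using add_mult_distrib_mat_vec[of "complex_of_real (-1) \<cdot>\<^sub>m cmat (transpose_mat (A 0))" n n "cmat (transpose_mat C * D * ?Xi * transpose_mat B)" y]
        smult_mat_mv[of "cmat (transpose_mat (A 0))" n n y] A0T P4 y i carrier_matD[OF P4] carrier_matD[OF A0T] by simp
  qed
  have sumT: "(\<Sum>l\<in>{1..m}. poly p (complex_of_real (- \<tau> l)) * (cmat (Mplus n (A l)) *\<^sub>v (x @\<^sub>v y)) $ i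
        + cnj (poly p (complex_of_real (- \<tau> l))) * (cmat (Mminus n (A l)) *\<^sub>v (x @\<^sub>v y)) $ i)
      = (\<Sum>l\<in>{1..m}. poly p (complex_of_real (- \<tau> l)) * (cmat (A l) *\<^sub>v x) $ i)"
  proof (rule sum.cong[OF refl])
    fix l assume l: "l \<in> {1..m}"
    have Al: "A l \<in> carrier_mat n n" using A l by auto
    have AlT: "(-1) \<cdot>\<^sub>m transpose_mat (A l) \<in> carrier_mat n n" using Al by simp
    have z: "0\<^sub>m n n \<in> carrier_mat n n" by simp
    have "(cmat (Mplus n (A l)) *\<^sub>v (x @\<^sub>v y)) $ i = (cmat (A l) *\<^sub>v x) $ i"
      unfolding Mplus_def cmat_four_block[OF Al z z z] cmat_zero
      using four_block_mv_idx(1)[of "cmat (A l)" n "0\<^sub>m n n" "0\<^sub>m n n" "0\<^sub>m n n" x y i] Al x y i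
      by (simp add: zero_mv_idx[OF y i])
    moreover have "(cmat (Mminus n (A l)) *\<^sub>v (x @\<^sub>v y)) $ i = 0"
      unfolding Mminus_def cmat_four_block[OF z z z AlT] cmat_zero
      using four_block_mv_idx(1)[of "0\<^sub>m n n" n "0\<^sub>m n n" "0\<^sub>m n n" "cmat ((-1) \<cdot>\<^sub>m transpose_mat (A l))" x y i] AlT x y i
      by (simp add: zero_mv_idx[OF y i] zero_mv_idx[OF x i])
    ultimately show "poly p (complex_of_real (- \<tau> l)) * (cmat (Mplus n (A l)) *\<^sub>v (x @\<^sub>v y)) $ i
        + cnj (poly p (complex_of_real (- \<tau> l))) * (cmat (Mminus n (A l)) *\<^sub>v (x @\<^sub>v y)) $ i
      = poly p (complex_of_real (- \<tau> l)) * (cmat (A l) *\<^sub>v x) $ i" by simp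
  qed
  have sumB: "(\<Sum>l\<in>{1..m}. poly p (complex_of_real (- \<tau> l)) * (cmat (Mplus n (A l)) *\<^sub>v (x @\<^sub>v y)) $ (n + i)
        + cnj (poly p (complex_of_real (- \<tau> l))) * (cmat (Mminus n (A l)) *\<^sub>v (x @\<^sub>v y)) $ (n + i))
      = - (\<Sum>l\<in>{1..m}. cnj (poly p (complex_of_real (- \<tau> l))) * (cmat (transpose_mat (A l)) *\<^sub>v y) $ i)"
    unfolding sum_negf[symmetric]
  proof (rule sum.cong[OF refl])
    fix l assume l: "l \<in> {1..m}"
    have Al: "A l \<in> carrier_mat n n" using A l by auto
    have AlT: "(-1) \<cdot>\<^sub>m transpose_mat (A l) \<in> carrier_mat n n" using Al by simp
    have AlT': "transpose_mat (A l) \<in> carrier_mat n n" using Al by simp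
    have z: "0\<^sub>m n n \<in> carrier_mat n n" by simp
    have "(cmat (Mplus n (A l)) *\<^sub>v (x @\<^sub>v y)) $ (n + i) = 0"
      unfolding Mplus_def cmat_four_block[OF Al z z z] cmat_zero
      using four_block_mv_idx(2)[of "cmat (A l)" n "0\<^sub>m n n" "0\<^sub>m n n" "0\<^sub>m n n" x y i] Al x y i
      by (simp add: zero_mv_idx[OF y i] zero_mv_idx[OF x i])
    moreover have "(cmat (Mminus n (A l)) *\<^sub>v (x @\<^sub>v y)) $ (n + i) = - (cmat (transpose_mat (A l)) *\<^sub>v y) $ i"
    proof -
      have "(cmat (Mminus n (A l)) *\<^sub>v (x @\<^sub>v y)) $ (n + i) = (cmat ((-1) \<cdot>\<^sub>m transpose_mat (A l)) *\<^sub>v y) $ i"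
        unfolding Mminus_def cmat_four_block[OF z z z AlT] cmat_zero
        using four_block_mv_idx(2)[of "0\<^sub>m n n" n "0\<^sub>m n n" "0\<^sub>m n n" "cmat ((-1) \<cdot>\<^sub>m transpose_mat (A l))" x y i] AlT x y i
        by (simp add: zero_mv_idx[OF x i])
      also have "\<dots> = - (cmat (transpose_mat (A l)) *\<^sub>v y) $ i"
        unfolding cmat_smult using smult_mat_mv[of "cmat (transpose_mat (A l))" n n y] AlT' y i by simp
      finally show ?thesis .
    qed
    ultimately show "poly p (complex_of_real (- \<tau> l)) * (cmat (Mplus n (A l)) *\<^sub>v (x @\<^sub>v y)) $ (n + i)
        + cnj (poly p (complex_of_real (- \<tau> l))) * (cmat (Mminus n (A l)) *\<^sub>v (x @\<^sub>v y)) $ (n + i)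
      = - (cnj (poly p (complex_of_real (- \<tau> l))) * (cmat (transpose_mat (A l)) *\<^sub>v y) $ i)" by simp
  qed
  have ki: "i < 2*n" "n + i < 2*n" using i by auto
  show "Hop n m nu ny A B C D \<tau> \<xi> p (x @\<^sub>v y) $ i = (cmat (A 0) *\<^sub>v x) $ i
      - (cmat B *\<^sub>v (cmat ?Xi *\<^sub>v (mat_adjoint (cmat D) *\<^sub>v (cmat C *\<^sub>v x)))) $ i
      - (cmat B *\<^sub>v (cmat ?Xi *\<^sub>v (mat_adjoint (cmat B) *\<^sub>v y))) $ i
      + (\<Sum>l\<in>{1..m}. poly p (complex_of_real (- \<tau> l)) * (cmat (A l) *\<^sub>v x) $ i)"
    unfolding Hop_idx[OF v ki(1) A B C] sumT cM0 fb(1) e11 e12 cP1 cP2 by simp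
  show "Hop n m nu ny A B C D \<tau> \<xi> p (x @\<^sub>v y) $ (n + i) =
      complex_of_real (\<xi>^2) * (mat_adjoint (cmat C) *\<^sub>v (cmat ?Yi *\<^sub>v (cmat C *\<^sub>v x))) $ i
      - (cmat (transpose_mat (A 0)) *\<^sub>v y) $ i
      + (mat_adjoint (cmat C) *\<^sub>v (cmat D *\<^sub>v (cmat ?Xi *\<^sub>v (mat_adjoint (cmat B) *\<^sub>v y)))) $ i
      - (\<Sum>l\<in>{1..m}. cnj (poly p (complex_of_real (- \<tau> l))) * (cmat (transpose_mat (A l)) *\<^sub>v y) $ i)"
    unfolding Hop_idx[OF v ki(2) A B C] sumB cM0 fb(2) e21 e22 cP3 cP4 by simp
qed


lemma all_2n: "(\<forall>k<2*(n::nat). P k) \<longleftrightarrow> (\<forall>i<n. P i) \<and> (\<forall>i<n. P (n + i))"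
proof
  assume "\<forall>k<2*n. P k" then show "(\<forall>i<n. P i) \<and> (\<forall>i<n. P (n + i))" by auto
next
  assume h: "(\<forall>i<n. P i) \<and> (\<forall>i<n. P (n + i))"
  show "\<forall>k<2*n. P k"
  proof (intro allI impI)
    fix k assume k: "k < 2*n"
    show "P k"
    proof (cases "k < n")
      case True then show ?thesis using h by auto
    next
      case False then have "k = n + (k - n)" "k - n < n" using k by auto
      then show ?thesis using h by metis
    qed
  qed
qed

lemma zero_append: "(x @\<^sub>v y = 0\<^sub>v (2*n)) \<longleftrightarrow> x = 0\<^sub>v n \<and> y = 0\<^sub>v n" if "x \<in> carrier_vec n" "y \<in> carrier_vec n"
proof -
  have "0\<^sub>v (2*n) = (0\<^sub>v n @\<^sub>v 0\<^sub>v n :: 'a :: zero vec)" by (intro eq_vecI) auto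
  then show ?thesis using append_vec_eq[OF that(1), of "0\<^sub>v n" y "0\<^sub>v n"] by simp
qed

lemma Hop_iff_E:
  fixes \<omega> :: real
  assumes A: "\<forall>i\<in>{0..m}. A i \<in> carrier_mat n n"
    and B: "B \<in> carrier_mat n nu" and C: "C \<in> carrier_mat ny n" and D: "D \<in> carrier_mat ny nu"
    and X: "minv (Dxi nu D \<xi>) \<in> carrier_mat nu nu" and Y: "minv (Dtxi ny D \<xi>) \<in> carrier_mat ny ny"
    and x: "x \<in> carrier_vec n" and y: "y \<in> carrier_vec n"
  shows "Hop n m nu ny A B C D \<tau> \<xi> (pN \<theta> N (\<i> * complex_of_real \<omega>)) (x @\<^sub>v y) = (\<i> * complex_of_real \<omega>) \<cdot>\<^sub>v (x @\<^sub>v y)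
    \<longleftrightarrow> KN n m A \<tau> \<theta> N \<omega> *\<^sub>v x + cmat B *\<^sub>v (cmat (minv (Dxi nu D \<xi>)) *\<^sub>v (mat_adjoint (cmat D) *\<^sub>v (cmat C *\<^sub>v x)))
            + cmat B *\<^sub>v (cmat (minv (Dxi nu D \<xi>)) *\<^sub>v (mat_adjoint (cmat B) *\<^sub>v y)) = 0\<^sub>v n
      \<and> complex_of_real (\<xi>^2) \<cdot>\<^sub>v (mat_adjoint (cmat C) *\<^sub>v (cmat (minv (Dtxi ny D \<xi>)) *\<^sub>v (cmat C *\<^sub>v x)))
            + mat_adjoint (KN n m A \<tau> \<theta> N \<omega>) *\<^sub>v y
            + mat_adjoint (cmat C) *\<^sub>v (cmat D *\<^sub>v (cmat (minv (Dxi nu D \<xi>)) *\<^sub>v (mat_adjoint (cmat B) *\<^sub>v y))) = 0\<^sub>v n"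
proof -
  let ?H = "Hop n m nu ny A B C D \<tau> \<xi> (pN \<theta> N (\<i> * complex_of_real \<omega>)) (x @\<^sub>v y)"
  let ?E1 = "KN n m A \<tau> \<theta> N \<omega> *\<^sub>v x + cmat B *\<^sub>v (cmat (minv (Dxi nu D \<xi>)) *\<^sub>v (mat_adjoint (cmat D) *\<^sub>v (cmat C *\<^sub>v x)))
            + cmat B *\<^sub>v (cmat (minv (Dxi nu D \<xi>)) *\<^sub>v (mat_adjoint (cmat B) *\<^sub>v y))"
  let ?E2 = "complex_of_real (\<xi>^2) \<cdot>\<^sub>v (mat_adjoint (cmat C) *\<^sub>v (cmat (minv (Dtxi ny D \<xi>)) *\<^sub>v (cmat C *\<^sub>v x)))
            + mat_adjoint (KN n m A \<tau> \<theta> N \<omega>) *\<^sub>v y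
            + mat_adjoint (cmat C) *\<^sub>v (cmat D *\<^sub>v (cmat (minv (Dxi nu D \<xi>)) *\<^sub>v (mat_adjoint (cmat B) *\<^sub>v y)))"
  let ?lam = "\<i> * complex_of_real \<omega>"
  have A0: "A 0 \<in> carrier_mat n n" using A by auto
  have K: "KN n m A \<tau> \<theta> N \<omega> \<in> carrier_mat n n" unfolding KN_def msum_def using A0 by auto
  have v: "x @\<^sub>v y \<in> carrier_vec (2*n)" using x y by (simp add: mult_2)
  have Hc: "?H \<in> carrier_vec (2*n)" by (rule Hop_carrier)
  have E1c: "?E1 \<in> carrier_vec n" using K B by (intro carrier_vecI) (simp add: carrier_matD)
  have E2c: "?E2 \<in> carrier_vec n" using K C by (intro carrier_vecI) (simp add: carrier_matD)
  note HB = Hop_blocks[OF A B C D X Y x y]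
  have dx: "dim_vec x = n" and dy: "dim_vec y = n" using x y by auto
  have "?H = ?lam \<cdot>\<^sub>v (x @\<^sub>v y) \<longleftrightarrow> (\<forall>k<2*n. ?H $ k = (?lam \<cdot>\<^sub>v (x @\<^sub>v y)) $ k)"
    by (rule vec_eq_idx[OF Hc]) (use v in simp)
  also have "\<dots> \<longleftrightarrow> (\<forall>i<n. ?H $ i = ?lam * x $ i) \<and> (\<forall>i<n. ?H $ (n + i) = ?lam * y $ i)"
    unfolding all_2n using dx dy by simp
  also have "(\<forall>i<n. ?H $ i = ?lam * x $ i) \<longleftrightarrow> (\<forall>i<n. ?E1 $ i = 0\<^sub>v n $ i)"
  proof (intro all_cong1 imp_cong refl)
    fix i assume i: "i < n"
    have dims: "dim_row (KN n m A \<tau> \<theta> N \<omega>) = n" "dim_row (cmat B) = n" using K B by auto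
    have "?E1 $ i = (KN n m A \<tau> \<theta> N \<omega> *\<^sub>v x) $ i
        + (cmat B *\<^sub>v (cmat (minv (Dxi nu D \<xi>)) *\<^sub>v (mat_adjoint (cmat D) *\<^sub>v (cmat C *\<^sub>v x)))) $ i
        + (cmat B *\<^sub>v (cmat (minv (Dxi nu D \<xi>)) *\<^sub>v (mat_adjoint (cmat B) *\<^sub>v y))) $ i"
      using i dims by (simp del: index_mult_mat_vec)
    note e = this
    show "(?H $ i = ?lam * x $ i) \<longleftrightarrow> (?E1 $ i = 0\<^sub>v n $ i)"
      unfolding e HB(1)[OF i] KN_idx[OF A x i] using i by (auto simp: algebra_simps)
  qed
  also have "(\<forall>i<n. ?H $ (n + i) = ?lam * y $ i) \<longleftrightarrow> (\<forall>i<n. ?E2 $ i = 0\<^sub>v n $ i)"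
  proof (intro all_cong1 imp_cong refl)
    fix i assume i: "i < n"
    have dims: "dim_row (mat_adjoint (KN n m A \<tau> \<theta> N \<omega>)) = n" "dim_row (mat_adjoint (cmat C)) = n" using K C by auto
    have "?E2 $ i = complex_of_real (\<xi>^2) * (mat_adjoint (cmat C) *\<^sub>v (cmat (minv (Dtxi ny D \<xi>)) *\<^sub>v (cmat C *\<^sub>v x))) $ i
            + (mat_adjoint (KN n m A \<tau> \<theta> N \<omega>) *\<^sub>v y) $ i
            + (mat_adjoint (cmat C) *\<^sub>v (cmat D *\<^sub>v (cmat (minv (Dxi nu D \<xi>)) *\<^sub>v (mat_adjoint (cmat B) *\<^sub>v y)))) $ i"
      using i dims by (simp del: index_mult_mat_vec)
    note e = this
    show "(?H $ (n + i) = ?lam * y $ i) \<longleftrightarrow> (?E2 $ i = 0\<^sub>v n $ i)"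
      unfolding e HB(2)[OF i] KNadj_idx[OF A y i] using i by (auto simp: algebra_simps)
  qed
  also have "(\<forall>i<n. ?E1 $ i = 0\<^sub>v n $ i) \<longleftrightarrow> ?E1 = 0\<^sub>v n" by (rule vec_eq_idx[symmetric, OF E1c]) simp
  also have "(\<forall>i<n. ?E2 $ i = 0\<^sub>v n $ i) \<longleftrightarrow> ?E2 = 0\<^sub>v n" by (rule vec_eq_idx[symmetric, OF E2c]) simp
  finally show ?thesis .
qed


theorem theorem3:
  fixes n m nu ny N :: nat and A :: "nat \<Rightarrow> real mat" and B C D :: "real mat"
    and \<tau> :: "nat \<Rightarrow> real" and \<theta> :: "int \<Rightarrow> real" and \<xi> \<omega> :: real
  assumes "n > 0" "m > 0" "nu > 0" "ny > 0" "N > 0"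
    and "\<forall>i\<in>{0..m}. A i \<in> carrier_mat n n"
    and "B \<in> carrier_mat n nu" "C \<in> carrier_mat ny n" "D \<in> carrier_mat ny nu"
    and "\<forall>i\<in>{1..m}. \<tau> i \<ge> 0" "Max (\<tau> ` {1..m}) > 0"
    and "strict_mono_on {-int N..int N} \<theta>" "\<theta> 0 = 0"
    and "- Max (\<tau> ` {1..m}) \<le> \<theta> (- int N)" "\<theta> (int N) \<le> Max (\<tau> ` {1..m})"
    and "\<forall>i\<in>{1..int N}. \<theta> (- i) = - \<theta> i"
    and "\<xi> > 0" "det (Dxi nu D \<xi>) \<noteq> 0"
    and "\<exists>!p. pN_prop \<theta> N (\<i> * complex_of_real \<omega>) p"
    and "det (KN n m A \<tau> \<theta> N \<omega>) \<noteq> 0"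
  shows "eigenvalue (LN_mat n m nu ny A B C D \<tau> \<theta> N \<xi>) (\<i> * complex_of_real \<omega>)
     \<longleftrightarrow> singular_value (GN n m A B C D \<tau> \<theta> N \<omega>) \<xi>"
proof -
  let ?lam = "\<i> * complex_of_real \<omega>"
  let ?p = "pN \<theta> N ?lam"
  note A = assms(6) and B = assms(7) and C = assms(8) and D = assms(9)
  have inj: "inj_on \<theta> (Imesh N)" by (rule strict_mono_on_imp_inj_on[OF assms(12)])
  have n: "n > 0" using assms(1) .
  have th0: "\<theta> 0 = 0" using assms(13) .
  have ex: "\<exists>!p. pN_prop \<theta> N ?lam p" using assms(19) .
  have psym: "\<forall>l\<in>{1..m}. poly ?p (complex_of_real (\<tau> l)) = cnj (poly ?p (complex_of_real (- \<tau> l)))"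
    using pN_sym[OF ex assms(16) th0] by blast
  have A0: "A 0 \<in> carrier_mat n n" using A by auto
  have K: "KN n m A \<tau> \<theta> N \<omega> \<in> carrier_mat n n" unfolding KN_def msum_def using A0 by auto
  note Kp = minv_props[OF K assms(20)]
  have xi0: "\<xi> \<noteq> 0" using assms(17) by simp
  have dDt: "det (Dtxi ny D \<xi>) \<noteq> 0" by (rule det_Dtxi[OF D xi0 assms(18)])
  note Xp = minv_props[OF Dxi_carrier[OF D] assms(18)]
  note Yp = minv_props[OF Dtxi_carrier[OF D] dDt]
  let ?Xc = "cmat (minv (Dxi nu D \<xi>))" and ?Yc = "cmat (minv (Dtxi ny D \<xi>))"
  let ?s = "complex_of_real (\<xi>^2)"
  have DT: "transpose_mat D \<in> carrier_mat nu ny" using D by simp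
  have cDx: "cmat (Dxi nu D \<xi>) = mat_adjoint (cmat D) * cmat D - ?s \<cdot>\<^sub>m 1\<^sub>m nu"
  proof -
    have DTD: "transpose_mat D * D \<in> carrier_mat nu nu" using D by simp
    have sI: "\<xi>^2 \<cdot>\<^sub>m 1\<^sub>m nu \<in> carrier_mat nu nu" by simp
    show ?thesis unfolding Dxi_def cmat_minus[OF DTD sI] cmat_mult[OF DT D] cmat_smult cmat_one adj_cmat ..
  qed
  have XD: "?Xc * (mat_adjoint (cmat D) * cmat D - ?s \<cdot>\<^sub>m 1\<^sub>m nu) = 1\<^sub>m nu"
    unfolding cDx[symmetric] cmat_mult[OF Xp(3) Dxi_carrier[OF D], symmetric] Xp(2) cmat_one ..
  have DX: "(mat_adjoint (cmat D) * cmat D - ?s \<cdot>\<^sub>m 1\<^sub>m nu) * ?Xc = 1\<^sub>m nu"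
    unfolding cDx[symmetric] cmat_mult[OF Dxi_carrier[OF D] Xp(3), symmetric] Xp(1) cmat_one ..
  have DXD: "cmat D * ?Xc * mat_adjoint (cmat D) = 1\<^sub>m ny + ?s \<cdot>\<^sub>m ?Yc"
  proof -
    have DXm: "D * minv (Dxi nu D \<xi>) \<in> carrier_mat ny nu" using D Xp(3) by simp
    have "cmat D * ?Xc * mat_adjoint (cmat D) = cmat (D * minv (Dxi nu D \<xi>) * transpose_mat D)"
      unfolding adj_cmat cmat_mult[OF DXm DT] cmat_mult[OF D Xp(3)] ..
    also have "\<dots> = cmat (1\<^sub>m ny + \<xi>^2 \<cdot>\<^sub>m minv (Dtxi ny D \<xi>))" unfolding DXD_real[OF D assms(18) dDt] ..
    also have "\<dots> = 1\<^sub>m ny + ?s \<cdot>\<^sub>m ?Yc"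
      using cmat_add[of "1\<^sub>m ny" ny ny "\<xi>^2 \<cdot>\<^sub>m minv (Dtxi ny D \<xi>)"] Yp(3) by (simp add: cmat_one cmat_smult)
    finally show ?thesis .
  qed
  have cB: "cmat B \<in> carrier_mat n nu" and cC: "cmat C \<in> carrier_mat ny n" and cD: "cmat D \<in> carrier_mat ny nu"
    and cX: "?Xc \<in> carrier_mat nu nu" and cY: "?Yc \<in> carrier_mat ny ny"
    using B C D Xp(3) Yp(3) by auto
  note H = ham_sv[OF K Kp(3) Kp(1) Kp(2) cB cC cD cX cY XD DX DXD]
  have step1: "eigenvalue (LN_mat n m nu ny A B C D \<tau> \<theta> N \<xi>) ?lam \<longleftrightarrow>
     (\<exists>v. v \<in> carrier_vec (2*n) \<and> v \<noteq> 0\<^sub>v (2*n) \<and> Hop n m nu ny A B C D \<tau> \<xi> ?p v = ?lam \<cdot>\<^sub>v v)"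
    by (rule eig_iff_Hop[OF inj n A B C th0 ex psym])
  note HE = Hop_iff_E[OF A B C D Xp(3) Yp(3)]
  have step2: "(\<exists>v. v \<in> carrier_vec (2*n) \<and> v \<noteq> 0\<^sub>v (2*n) \<and> Hop n m nu ny A B C D \<tau> \<xi> ?p v = ?lam \<cdot>\<^sub>v v)
    \<longleftrightarrow> (\<exists>x y. x \<in> carrier_vec n \<and> y \<in> carrier_vec n \<and> (x \<noteq> 0\<^sub>v n \<or> y \<noteq> 0\<^sub>v n) \<and>
          KN n m A \<tau> \<theta> N \<omega> *\<^sub>v x + cmat B *\<^sub>v (?Xc *\<^sub>v (mat_adjoint (cmat D) *\<^sub>v (cmat C *\<^sub>v x))) + cmat B *\<^sub>v (?Xc *\<^sub>v (mat_adjoint (cmat B) *\<^sub>v y)) = 0\<^sub>v n \<and>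
          ?s \<cdot>\<^sub>v (mat_adjoint (cmat C) *\<^sub>v (?Yc *\<^sub>v (cmat C *\<^sub>v x))) + mat_adjoint (KN n m A \<tau> \<theta> N \<omega>) *\<^sub>v y
            + mat_adjoint (cmat C) *\<^sub>v (cmat D *\<^sub>v (?Xc *\<^sub>v (mat_adjoint (cmat B) *\<^sub>v y))) = 0\<^sub>v n)"
  proof
    assume "\<exists>v. v \<in> carrier_vec (2*n) \<and> v \<noteq> 0\<^sub>v (2*n) \<and> Hop n m nu ny A B C D \<tau> \<xi> ?p v = ?lam \<cdot>\<^sub>v v"
    then obtain v where v: "v \<in> carrier_vec (2*n)" and v0: "v \<noteq> 0\<^sub>v (2*n)" and Hv: "Hop n m nu ny A B C D \<tau> \<xi> ?p v = ?lam \<cdot>\<^sub>v v"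
      by blast
    let ?x = "vec_first v n" and ?y = "vec_last v n"
    have v': "v \<in> carrier_vec (n + n)" using v by (simp add: mult_2)
    have ve: "?x @\<^sub>v ?y = v" by (rule vec_first_last_append[OF v'])
    have xc: "?x \<in> carrier_vec n" and yc: "?y \<in> carrier_vec n" by auto
    have "?x \<noteq> 0\<^sub>v n \<or> ?y \<noteq> 0\<^sub>v n" using v0 zero_append[OF xc yc] ve by auto
    moreover have "Hop n m nu ny A B C D \<tau> \<xi> ?p (?x @\<^sub>v ?y) = ?lam \<cdot>\<^sub>v (?x @\<^sub>v ?y)" using Hv ve by simp
    ultimately show "\<exists>x y. x \<in> carrier_vec n \<and> y \<in> carrier_vec n \<and> (x \<noteq> 0\<^sub>v n \<or> y \<noteq> 0\<^sub>v n) \<and>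
          KN n m A \<tau> \<theta> N \<omega> *\<^sub>v x + cmat B *\<^sub>v (?Xc *\<^sub>v (mat_adjoint (cmat D) *\<^sub>v (cmat C *\<^sub>v x))) + cmat B *\<^sub>v (?Xc *\<^sub>v (mat_adjoint (cmat B) *\<^sub>v y)) = 0\<^sub>v n \<and>
          ?s \<cdot>\<^sub>v (mat_adjoint (cmat C) *\<^sub>v (?Yc *\<^sub>v (cmat C *\<^sub>v x))) + mat_adjoint (KN n m A \<tau> \<theta> N \<omega>) *\<^sub>v y
            + mat_adjoint (cmat C) *\<^sub>v (cmat D *\<^sub>v (?Xc *\<^sub>v (mat_adjoint (cmat B) *\<^sub>v y))) = 0\<^sub>v n"
      using HE[OF xc yc] xc yc by blast
  next
    assume "\<exists>x y. x \<in> carrier_vec n \<and> y \<in> carrier_vec n \<and> (x \<noteq> 0\<^sub>v n \<or> y \<noteq> 0\<^sub>v n) \<and>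
          KN n m A \<tau> \<theta> N \<omega> *\<^sub>v x + cmat B *\<^sub>v (?Xc *\<^sub>v (mat_adjoint (cmat D) *\<^sub>v (cmat C *\<^sub>v x))) + cmat B *\<^sub>v (?Xc *\<^sub>v (mat_adjoint (cmat B) *\<^sub>v y)) = 0\<^sub>v n \<and>
          ?s \<cdot>\<^sub>v (mat_adjoint (cmat C) *\<^sub>v (?Yc *\<^sub>v (cmat C *\<^sub>v x))) + mat_adjoint (KN n m A \<tau> \<theta> N \<omega>) *\<^sub>v y
            + mat_adjoint (cmat C) *\<^sub>v (cmat D *\<^sub>v (?Xc *\<^sub>v (mat_adjoint (cmat B) *\<^sub>v y))) = 0\<^sub>v n"
    then obtain x y where xc: "x \<in> carrier_vec n" and yc: "y \<in> carrier_vec n" and nz: "x \<noteq> 0\<^sub>v n \<or> y \<noteq> 0\<^sub>v n"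
      and E: "KN n m A \<tau> \<theta> N \<omega> *\<^sub>v x + cmat B *\<^sub>v (?Xc *\<^sub>v (mat_adjoint (cmat D) *\<^sub>v (cmat C *\<^sub>v x))) + cmat B *\<^sub>v (?Xc *\<^sub>v (mat_adjoint (cmat B) *\<^sub>v y)) = 0\<^sub>v n \<and>
          ?s \<cdot>\<^sub>v (mat_adjoint (cmat C) *\<^sub>v (?Yc *\<^sub>v (cmat C *\<^sub>v x))) + mat_adjoint (KN n m A \<tau> \<theta> N \<omega>) *\<^sub>v y
            + mat_adjoint (cmat C) *\<^sub>v (cmat D *\<^sub>v (?Xc *\<^sub>v (mat_adjoint (cmat B) *\<^sub>v y))) = 0\<^sub>v n"
      by blast
    have "x @\<^sub>v y \<in> carrier_vec (2*n)" using xc yc by (simp add: mult_2)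
    moreover have "x @\<^sub>v y \<noteq> 0\<^sub>v (2*n)" using nz zero_append[OF xc yc] by simp
    moreover have "Hop n m nu ny A B C D \<tau> \<xi> ?p (x @\<^sub>v y) = ?lam \<cdot>\<^sub>v (x @\<^sub>v y)" using HE[OF xc yc] E by simp
    ultimately show "\<exists>v. v \<in> carrier_vec (2*n) \<and> v \<noteq> 0\<^sub>v (2*n) \<and> Hop n m nu ny A B C D \<tau> \<xi> ?p v = ?lam \<cdot>\<^sub>v v"
      by blast
  qed
  let ?G = "GN n m A B C D \<tau> \<theta> N \<omega>"
  have Gdef: "?G = cmat C * minv (KN n m A \<tau> \<theta> N \<omega>) * cmat B + cmat D" unfolding GN_def ..
  have Gc: "?G \<in> carrier_mat ny nu" unfolding Gdef using cC Kp(3) cB cD by simp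
  have dimGG: "dim_row (mat_adjoint ?G * ?G) = nu" using Gc by simp
  have step4: "singular_value ?G \<xi> \<longleftrightarrow> (\<exists>u. u \<in> carrier_vec nu \<and> u \<noteq> 0\<^sub>v nu \<and>
          (mat_adjoint (cmat C * minv (KN n m A \<tau> \<theta> N \<omega>) * cmat B + cmat D) * (cmat C * minv (KN n m A \<tau> \<theta> N \<omega>) * cmat B + cmat D)) *\<^sub>v u = ?s \<cdot>\<^sub>v u)"
    unfolding singular_value_def eigenvalue_def eigenvector_def dimGG using assms(17) Gdef by auto
  show ?thesis unfolding step1 step2 H step4 ..
qed


end
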